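(* Let $p \in (0,1)$. Define $\{X_i\}_{i\ge1}$ by: $X_1 = 1$ with probability one, and for each $n \ge 1$, with $U_n$ uniform on $\{1,\dots,n\}$ (independent of everything else), $X_{n+1} = X_{U_n}$ with probability $p$ and $X_{n+1}=0$ with probability $1-p$ (all choices independent). Let $H_n := \sum_{i=1}^n X_i$, $\mathcal{F}_n := \sigma(X_1,\dots,X_n)$, $a_0 := 1$, $a_n := \prod_{k=1}^{n-1}(1 + p/k) = \frac{\Gamma(n+p)}{\Gamma(n)\Gamma(1+p)}$ for $n \ge 1$, and $\widehat{M}_n := H_n/a_n$, a nonnegative martingale with a.s. limit $\widehat{W} := \lim_{n\to\infty} \widehat{M}_n$. Then for every $k = 1,2,\dots$, $$\lim_{n\to\infty} E\left[\left(\frac{H_n}{n^p}\right)^k\right] = \frac{k!}{\Gamma(1+kp)}.$$ Consequently the martingale $\{\widehat{M}_n\}$ is $L^k$-bounded for every $k$, and the almost sure limit $$\mathcal{W} := \lim_{n\to\infty} \frac{H_n}{n^p} = \frac{\widehat{W}}{\Gamma(1+p)}$$ has the Mittag--Leffler distribution with parameter $p$. In particular $P(\mathcal{W} > 0) = 1$.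
   Context: A random variable $X$ is Mittag--Leffler distributed with parameter $p\in[0,1]$ if $E[e^{\lambda X}] = \sum_{k=0}^\infty \frac{\lambda^k}{\Gamma(1+kp)}$ for all $\lambda\in\mathbb{R}$; equivalently its $k$-th moment is $k!/\Gamma(1+kp)$ for every $k$, and this distribution is determined by its moments. *)

theory Defs
  imports "HOL-Probability.Probability"
begin

text \<open>Law of the list [X_1, ..., X_n] of the process (list index i holds X_(i+1)).\<close>
fun proc_pmf :: "real \<Rightarrow> nat \<Rightarrow> nat list pmf" where
  "proc_pmf p 0 = return_pmf []"
| "proc_pmf p (Suc 0) = return_pmf [1]"
| "proc_pmf p (Suc (Suc n)) =
     bind_pmf (proc_pmf p (Suc n)) (\<lambda>xs.
     bind_pmf (pmf_of_set {..<Suc n}) (\<lambda>u.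
     bind_pmf (bernoulli_pmf p) (\<lambda>b.
     return_pmf (xs @ [if b then xs ! u else 0]))))"

definition a_seq :: "real \<Rightarrow> nat \<Rightarrow> real" where
  "a_seq p n = (\<Prod>k=1..<n. 1 + p / real k)"

definition mittag_leffler_distributed :: "'a measure \<Rightarrow> real \<Rightarrow> ('a \<Rightarrow> real) \<Rightarrow> bool" where
  "mittag_leffler_distributed M p W \<longleftrightarrow>
     W \<in> borel_measurable M \<and>
     (\<forall>l::real. integrable M (\<lambda>\<omega>. exp (l * W \<omega>)) \<and>
        (\<lambda>k. l ^ k / Gamma (1 + real k * p)) sums (integral\<^sup>L M (\<lambda>\<omega>. exp (l * W \<omega>))))"

end

theory Submission
  imports Defs
begin

definition L01 :: "nat \<Rightarrow> nat list set" where
  "L01 n = {xs. length xs = n \<and> set xs \<subseteq> {0,1}}"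

lemma finite_L01: "finite (L01 n)"
proof -
  have "L01 n \<subseteq> {xs. set xs \<subseteq> {0,1} \<and> length xs = n}" by (auto simp: L01_def)
  moreover have "finite {xs. set xs \<subseteq> {0::nat,1} \<and> length xs = n}"
    by (rule finite_lists_length_eq) auto
  ultimately show ?thesis by (rule finite_subset)
qed

lemma proc_support: "set_pmf (proc_pmf p n) \<subseteq> L01 n"
proof (induction p n rule: proc_pmf.induct)
  case (1 p) then show ?case by (simp add: L01_def)
next
  case (2 p) then show ?case by (simp add: L01_def)
next
  case (3 p n)
  show ?case
  proof
    fix ys assume "ys \<in> set_pmf (proc_pmf p (Suc (Suc n)))"
    moreover have "set_pmf (pmf_of_set {..<Suc n}) = {..<Suc n}"
      by (rule set_pmf_of_set) auto
    ultimately obtain xs u b where xs: "xs \<in> set_pmf (proc_pmf p (Suc n))" and u: "u < Suc n"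
      and ys: "ys = xs @ [if b then xs ! u else 0]"
      by auto
    from xs 3 have "xs \<in> L01 (Suc n)" by auto
    then have "u < length xs" "set xs \<subseteq> {0,1}" using u by (auto simp: L01_def)
    then have "xs ! u \<in> {0,1}" using nth_mem[of u xs] by blast
    with \<open>xs \<in> L01 (Suc n)\<close> show "ys \<in> L01 (Suc (Suc n))" using ys by (auto simp: L01_def)
  qed
qed

lemma finite_proc_support: "finite (set_pmf (proc_pmf p n))"
  using finite_subset[OF proc_support finite_L01] .

abbreviation EE :: "real \<Rightarrow> nat \<Rightarrow> (nat list \<Rightarrow> real) \<Rightarrow> real" where
  "EE p n F \<equiv> measure_pmf.expectation (proc_pmf p n) F"

lemma EE_sum: "EE p n F = (\<Sum>xs\<in>L01 n. pmf (proc_pmf p n) xs * F xs)"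
  by (subst integral_measure_pmf[OF finite_L01]) (use proc_support in auto)

lemma proc_step:
  assumes "0 \<le> p" "p \<le> 1"
  shows "EE p (Suc (Suc n)) F = EE p (Suc n)
     (\<lambda>xs. (\<Sum>u<Suc n. p * F (xs @ [xs ! u]) + (1 - p) * F (xs @ [0])) / real (Suc n))"
proof -
  have inner: "measure_pmf.expectation
      (bind_pmf (pmf_of_set {..<Suc n}) (\<lambda>u. bind_pmf (bernoulli_pmf p) (\<lambda>b.
          return_pmf (xs @ [if b then xs ! u else 0])))) F
     = (\<Sum>u<Suc n. p * F (xs @ [xs ! u]) + (1 - p) * F (xs @ [0])) / real (Suc n)" for xs
  proof -
    have b: "measure_pmf.expectation (bind_pmf (bernoulli_pmf p) (\<lambda>b.
          return_pmf (xs @ [if b then xs ! u else 0]))) F = p * F (xs @ [xs ! u]) + (1 - p) * F (xs @ [0])" for u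
      using assms by (simp add: map_pmf_def[symmetric] integral_map_pmf o_def)
    show ?thesis unfolding sum_divide_distrib
      by (subst pmf_expectation_bind_pmf_of_set) (simp_all add: b scaleR_conv_of_real divide_inverse mult.commute lessThan_empty_iff del: sum.lessThan_Suc lessThan_Suc)
  qed
  show ?thesis
    apply (simp only: proc_pmf.simps)
    apply (subst pmf_expectation_bind[OF finite_L01 _ proc_support])
    subgoal for xs
    proof -
      have "set_pmf (pmf_of_set {..<Suc n}) = {..<Suc n}" by (rule set_pmf_of_set) auto
      then have "set_pmf (pmf_of_set {..<Suc n} \<bind>
         (\<lambda>u. bernoulli_pmf p \<bind> (\<lambda>b. return_pmf (xs @ [if b then xs ! u else 0]))))
         \<subseteq> (\<lambda>(u,b). xs @ [if b then xs ! u else 0]) ` ({..<Suc n} \<times> UNIV)" by auto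
      then show ?thesis by (rule finite_subset) auto
    qed
    apply (subst EE_sum)
    apply (simp add: inner)
    done
qed

lemma proc_sum_ge1: "xs \<in> set_pmf (proc_pmf p n) \<Longrightarrow> n \<ge> 1 \<Longrightarrow> sum_list xs \<ge> 1"
proof (induction p n arbitrary: xs rule: proc_pmf.induct)
  case (3 p n)
  then obtain ys y where "ys \<in> set_pmf (proc_pmf p (Suc n))" "xs = ys @ [y]" by auto
  with 3 show ?case by fastforce
qed auto

lemma EE_cong: "(\<And>xs. xs \<in> set_pmf (proc_pmf p n) \<Longrightarrow> F xs = G xs) \<Longrightarrow> EE p n F = EE p n G"
  by (intro integral_cong_AE) (auto simp: AE_measure_pmf_iff)

lemma sum_nth_01:
  assumes "set xs \<subseteq> {0,1}"
  shows "(\<Sum>u<length xs. h (xs ! u)) = real (length xs - sum_list xs) * h 0 + real (sum_list xs) * (h 1 :: real)"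
    and "sum_list xs \<le> length xs"
  using assms
proof (induction xs rule: rev_induct)
  case (snoc x xs)
  { case 1 with snoc show ?case by (auto simp: nth_append algebra_simps of_nat_diff) }
  { case 2 with snoc show ?case by auto }
qed auto

lemma proc_step_phi:
  assumes "0 \<le> p" "p \<le> 1"
    and psi: "\<And>xs y. length xs = Suc n \<Longrightarrow> psi (xs @ [y]) = psi xs"
  shows "EE p (Suc (Suc n)) (\<lambda>xs. phi (sum_list xs) * psi xs) = EE p (Suc n)
     (\<lambda>xs. (phi (sum_list xs) + p * real (sum_list xs) / real (Suc n) *
              (phi (Suc (sum_list xs)) - phi (sum_list xs))) * psi xs)"
proof -
  have "EE p (Suc (Suc n)) (\<lambda>xs. phi (sum_list xs) * psi xs) = EE p (Suc n)
     (\<lambda>xs. (\<Sum>u<Suc n. p * (phi (sum_list (xs @ [xs ! u])) * psi (xs @ [xs ! u]))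
         + (1 - p) * (phi (sum_list (xs @ [0])) * psi (xs @ [0]))) / real (Suc n))"
    by (rule proc_step[OF assms(1,2)])
  also have "\<dots> = EE p (Suc n)
     (\<lambda>xs. (phi (sum_list xs) + p * real (sum_list xs) / real (Suc n) *
              (phi (Suc (sum_list xs)) - phi (sum_list xs))) * psi xs)"
  proof (rule EE_cong)
    fix xs assume "xs \<in> set_pmf (proc_pmf p (Suc n))"
    then have xs: "length xs = Suc n" "set xs \<subseteq> {0,1}" using proc_support unfolding L01_def by blast+
    define S where "S = sum_list xs"
    have Sle: "S \<le> Suc n" using sum_nth_01(2)[OF xs(2)] xs(1) S_def by simp
    have "(\<Sum>u<Suc n. p * (phi (sum_list (xs @ [xs ! u])) * psi (xs @ [xs ! u]))
         + (1 - p) * (phi (sum_list (xs @ [0])) * psi (xs @ [0])))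
       = (\<Sum>u<length xs. (\<lambda>y. p * phi (S + y) * psi xs + (1 - p) * phi S * psi xs) (xs ! u))"
      using xs by (simp add: psi S_def mult.assoc)
    also have "\<dots> = real (Suc n - S) * (p * phi S * psi xs + (1 - p) * phi S * psi xs)
         + real S * (p * phi (Suc S) * psi xs + (1 - p) * phi S * psi xs)"
      by (subst sum_nth_01(1)[OF xs(2)]) (simp add: S_def xs(1))
    finally show "(\<Sum>u<Suc n. p * (phi (sum_list (xs @ [xs ! u])) * psi (xs @ [xs ! u]))
         + (1 - p) * (phi (sum_list (xs @ [0])) * psi (xs @ [0]))) / real (Suc n) =
        (phi (sum_list xs) + p * real (sum_list xs) / real (Suc n) *
              (phi (Suc (sum_list xs)) - phi (sum_list xs))) * psi xs"
      using Sle unfolding S_def[symmetric] by (simp add: of_nat_diff field_simps)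
  qed
  finally show ?thesis .
qed

definition AA :: "real \<Rightarrow> nat \<Rightarrow> real" where
  "AA x n = (\<Prod>j=1..<n. 1 + x / real j)"

lemma AA_Suc: "n \<ge> 1 \<Longrightarrow> AA x (Suc n) = AA x n * (1 + x / real n)"
  unfolding AA_def by (simp add: prod.atLeastLessThan_Suc)

lemma AA_1[simp]: "AA x 1 = 1" and AA_Suc0[simp]: "AA x (Suc 0) = 1" and AA_0[simp]: "AA x 0 = 1"
  unfolding AA_def by auto

lemma a_seq_AA: "a_seq p n = AA p n"
  unfolding a_seq_def AA_def ..

lemma EE_1: "EE p 1 F = F [1]"
  by (simp add: numeral_eq_Suc)

lemma integrable_EE: "integrable (measure_pmf (proc_pmf p n)) (F :: nat list \<Rightarrow> real)"
  by (rule integrable_measure_pmf_finite[OF finite_proc_support])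

lemma poch_diff: "(S::real) * (pochhammer (S + 1) k - pochhammer S k) = real k * pochhammer S k"
proof -
  have "S * pochhammer (S + 1) k = (S + real k) * pochhammer S k"
    using pochhammer_rec[of S k] pochhammer_rec'[of S k] by simp
  then show ?thesis by (simp add: algebra_simps)
qed

lemma EE_poch:
  assumes "0 \<le> p" "p \<le> 1" "n \<ge> 1"
  shows "EE p n (\<lambda>xs. pochhammer (real (sum_list xs)) k) = fact k * AA (real k * p) n"
  using assms(3)
proof (induction n rule: dec_induct)
  case base then show ?case by (simp add: EE_1 pochhammer_fact)
next
  case (step m)
  then obtain m' where m: "m = Suc m'" by (cases m) auto
  have "EE p (Suc m) (\<lambda>xs. pochhammer (real (sum_list xs)) k)
      = EE p (Suc m) (\<lambda>xs. pochhammer (real (sum_list xs)) k * 1)" by simp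
  also have "\<dots> = EE p m (\<lambda>xs. (pochhammer (real (sum_list xs)) k + p * real (sum_list xs) / real m *
              (pochhammer (real (Suc (sum_list xs))) k - pochhammer (real (sum_list xs)) k)) * 1)"
    unfolding m by (rule proc_step_phi[OF assms(1,2)]) simp
  also have "\<dots> = EE p m (\<lambda>xs. (1 + real k * p / real m) * pochhammer (real (sum_list xs)) k)"
  proof (rule EE_cong)
    fix xs
    have "p * real (sum_list xs) / real m *
              (pochhammer (real (Suc (sum_list xs))) k - pochhammer (real (sum_list xs)) k)
        = p / real m * (real (sum_list xs) * (pochhammer (real (sum_list xs) + 1) k - pochhammer (real (sum_list xs)) k))"
      by (simp add: field_simps)
    also have "\<dots> = p / real m * (real k * pochhammer (real (sum_list xs)) k)" by (simp only: poch_diff)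
    finally show "(pochhammer (real (sum_list xs)) k + p * real (sum_list xs) / real m *
              (pochhammer (real (Suc (sum_list xs))) k - pochhammer (real (sum_list xs)) k)) * 1
        = (1 + real k * p / real m) * pochhammer (real (sum_list xs)) k"
      by (simp add: algebra_simps)
  qed
  also have "\<dots> = (1 + real k * p / real m) * (fact k * AA (real k * p) m)"
    by (simp add: step.IH)
  also have "\<dots> = fact k * AA (real k * p) (Suc m)"
    using step.hyps by (simp add: AA_Suc)
  finally show ?case .
qed

lemma EE_first:
  assumes "0 \<le> p" "p \<le> 1" "n \<ge> 1"
  shows "EE p n (\<lambda>xs. real (sum_list xs)) = AA p n"
  using EE_poch[OF assms, of 1] by simp

lemma EE_cross:
  assumes "0 \<le> p" "p \<le> 1" "n \<ge> 1" "n \<le> m"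
  shows "EE p m (\<lambda>xs. real (sum_list xs) * real (sum_list (take n xs)))
       = AA p m / AA p n * EE p n (\<lambda>xs. real (sum_list xs) ^ 2)"
  using assms(4)
proof (induction m rule: dec_induct)
  case base
  have pos: "AA p n > 0" unfolding AA_def using assms(1) by (intro prod_pos) (auto intro!: add_pos_nonneg)
  have "EE p n (\<lambda>xs. real (sum_list xs) * real (sum_list (take n xs))) = EE p n (\<lambda>xs. real (sum_list xs) ^ 2)"
  proof (rule EE_cong)
    fix xs assume "xs \<in> set_pmf (proc_pmf p n)"
    then have "length xs = n" using proc_support unfolding L01_def by blast
    then show "real (sum_list xs) * real (sum_list (take n xs)) = real (sum_list xs) ^ 2"
      by (simp add: power2_eq_square)
  qed
  then show ?case using pos by simp
next
  case (step m)
  then obtain m' where m: "m = Suc m'" using assms(3) by (cases m) auto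
  have "EE p (Suc m) (\<lambda>xs. real (sum_list xs) * real (sum_list (take n xs)))
    = EE p m (\<lambda>xs. (real (sum_list xs) + p * real (sum_list xs) / real m *
              (real (Suc (sum_list xs)) - real (sum_list xs))) * real (sum_list (take n xs)))"
    unfolding m by (rule proc_step_phi[OF assms(1,2)]) (use step.hyps m in auto)
  also have "\<dots> = EE p m (\<lambda>xs. (1 + p / real m) * (real (sum_list xs) * real (sum_list (take n xs))))"
    by (simp add: algebra_simps)
  also have "\<dots> = (1 + p / real m) * EE p m (\<lambda>xs. real (sum_list xs) * real (sum_list (take n xs)))"
    by (rule integral_mult_right_zero)
  also have "\<dots> = AA p (Suc m) / AA p n * EE p n (\<lambda>xs. real (sum_list xs) ^ 2)"
    using step assms by (simp add: AA_Suc)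
  finally show ?case .
qed

lemma EE_second:
  assumes "0 \<le> p" "p \<le> 1" "m \<ge> 1"
  shows "EE p (Suc m) (\<lambda>xs. real (sum_list xs) ^ 2)
     = (1 + 2 * p / real m) * EE p m (\<lambda>xs. real (sum_list xs) ^ 2) + p / real m * AA p m"
proof -
  obtain m' where m: "m = Suc m'" using assms(3) by (cases m) auto
  have "EE p (Suc m) (\<lambda>xs. real (sum_list xs) ^ 2) = EE p (Suc m) (\<lambda>xs. real (sum_list xs) ^ 2 * 1)" by simp
  also have "\<dots> = EE p m (\<lambda>xs. (real (sum_list xs) ^ 2 + p * real (sum_list xs) / real m *
              (real (Suc (sum_list xs)) ^ 2 - real (sum_list xs) ^ 2)) * 1)"
    unfolding m by (rule proc_step_phi[OF assms(1,2)]) simp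
  also have "\<dots> = EE p m (\<lambda>xs. (1 + 2 * p / real m) * real (sum_list xs) ^ 2 + p / real m * real (sum_list xs))"
    by (rule EE_cong) (simp add: field_simps power2_eq_square add_divide_distrib)
  also have "\<dots> = (1 + 2 * p / real m) * EE p m (\<lambda>xs. real (sum_list xs) ^ 2) + p / real m * AA p m"
    using EE_first[OF assms] by (simp add: integrable_EE)
  finally show ?thesis .
qed

definition GG :: "real \<Rightarrow> nat \<Rightarrow> real" where
  "GG s S = (\<Prod>j=1..<S. 1 - s / real j)"

lemma GG_Suc: "S \<ge> 1 \<Longrightarrow> GG s (Suc S) = GG s S * (1 - s / real S)"
  unfolding GG_def by (simp add: prod.atLeastLessThan_Suc)

lemma EE_GG:
  assumes "0 \<le> p" "p \<le> 1" "n \<ge> 1"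
  shows "EE p n (\<lambda>xs. GG s (sum_list xs)) = AA (- (p * s)) n"
  using assms(3)
proof (induction n rule: dec_induct)
  case base then show ?case by (simp add: EE_1 GG_def)
next
  case (step m)
  then obtain m' where m: "m = Suc m'" by (cases m) auto
  have "EE p (Suc m) (\<lambda>xs. GG s (sum_list xs)) = EE p (Suc m) (\<lambda>xs. GG s (sum_list xs) * 1)" by simp
  also have "\<dots> = EE p m (\<lambda>xs. (GG s (sum_list xs) + p * real (sum_list xs) / real m *
              (GG s (Suc (sum_list xs)) - GG s (sum_list xs))) * 1)"
    unfolding m by (rule proc_step_phi[OF assms(1,2)]) simp
  also have "\<dots> = EE p m (\<lambda>xs. (1 - p * s / real m) * GG s (sum_list xs))"
  proof (rule EE_cong)
    fix xs assume "xs \<in> set_pmf (proc_pmf p m)"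
    then have S1: "sum_list xs \<ge> 1" using proc_sum_ge1 step.hyps by blast
    have "GG s (Suc (sum_list xs)) = GG s (sum_list xs) * (1 - s / real (sum_list xs))"
      using S1 by (rule GG_Suc)
    then show "(GG s (sum_list xs) + p * real (sum_list xs) / real m *
              (GG s (Suc (sum_list xs)) - GG s (sum_list xs))) * 1
        = (1 - p * s / real m) * GG s (sum_list xs)"
    proof -
      define S where "S = sum_list xs"
      have "real S > 0" using S1 unfolding S_def by simp
      moreover have "GG s (Suc S) = GG s S * (1 - s / real S)" using S1 unfolding S_def by (rule GG_Suc)
      ultimately have e: "real S * (GG s (Suc S) - GG s S) = - s * GG s S"
        by (simp add: field_simps)
      have "(GG s S + p * real S / real m * (GG s (Suc S) - GG s S)) * 1
         = GG s S + p / real m * (real S * (GG s (Suc S) - GG s S))" by simp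
      also have "\<dots> = (1 - p * s / real m) * GG s S" unfolding e by (simp add: algebra_simps)
      finally show ?thesis unfolding S_def .
    qed
  qed
  also have "\<dots> = (1 - p * s / real m) * AA (- (p * s)) m"
    by (simp add: step.IH integral_mult_right_zero)
  also have "\<dots> = AA (- (p * s)) (Suc m)"
    using step.hyps by (simp add: AA_Suc)
  finally show ?case .
qed

lemma AA_pos: "x > -1 \<Longrightarrow> AA x n > 0"
  unfolding AA_def
proof (intro prod_pos)
  fix j assume "x > -1" "j \<in> {1..<n}"
  then have "x / real j > -1" by (auto simp: field_simps)
  then show "0 < 1 + x / real j" by simp
qed

lemma AA_poch: "AA x (Suc n) * fact n = pochhammer (x + 1) n"
proof (induction n)
  case (Suc n)
  have "AA x (Suc (Suc n)) * fact (Suc n) = (AA x (Suc n) * fact n) * (1 + x / real (Suc n)) * real (Suc n)"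
    by (simp add: AA_Suc del: of_nat_Suc)
  also have "\<dots> = pochhammer (x + 1) n * (x + 1 + real n)"
    unfolding Suc by (simp add: field_simps)
  also have "\<dots> = pochhammer (x + 1) (Suc n)" by (simp add: pochhammer_rec' mult.commute)
  finally show ?case .
qed simp

lemma AA_asymp:
  assumes "x > 0"
  shows "(\<lambda>n. AA x n / real n powr x) \<longlonglongrightarrow> 1 / Gamma (1 + x)"
proof -
  have eq: "rGamma_series x n / x = AA x (Suc n) / real n powr x" if "n \<ge> 1" for n
  proof -
    have "rGamma_series x n = pochhammer x (Suc n) / (fact n * exp (x * ln (real n)))"
      by (simp add: rGamma_series_def)
    also have "pochhammer x (Suc n) = x * (AA x (Suc n) * fact n)"
      by (simp add: pochhammer_rec AA_poch)
    also have "exp (x * ln (real n)) = real n powr x" using that by (simp add: powr_def mult.commute)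
    finally show ?thesis using assms by (simp add: field_simps)
  qed
  have "(\<lambda>n. rGamma_series x n / x) \<longlonglongrightarrow> rGamma x / x"
    using assms by (intro tendsto_intros) auto
  also have "rGamma x / x = 1 / Gamma (1 + x)"
  proof -
    have "x \<notin> \<int>\<^sub>\<le>\<^sub>0" using assms by (auto elim!: nonpos_Ints_cases)
    then have "Gamma (1 + x) = x * Gamma x" using Gamma_plus1[of x] by (simp add: add.commute)
    then show ?thesis using assms by (simp add: rGamma_inverse_Gamma field_simps)
  qed
  finally have lim0: "(\<lambda>n. rGamma_series x n / x) \<longlonglongrightarrow> 1 / Gamma (1 + x)" .
  have ev: "eventually (\<lambda>n. rGamma_series x n / x = AA x (Suc n) / real n powr x) sequentially"
    using eventually_ge_at_top[of 1] by eventually_elim (simp add: eq)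
  have lim1: "(\<lambda>n. AA x (Suc n) / real n powr x) \<longlonglongrightarrow> 1 / Gamma (1 + x)"
    by (rule Lim_transform_eventually[OF lim0 ev])
  have lim2: "(\<lambda>n. (real n / real (Suc n)) powr x) \<longlonglongrightarrow> 1 powr x"
    by (intro tendsto_powr LIMSEQ_n_over_Suc_n tendsto_const) auto
  have "(\<lambda>n. AA x (Suc n) / real n powr x * (real n / real (Suc n)) powr x) \<longlonglongrightarrow> 1 / Gamma (1 + x) * 1 powr x"
    by (intro tendsto_mult lim1 lim2)
  then have lim3: "(\<lambda>n. AA x (Suc n) / real n powr x * (real n / real (Suc n)) powr x) \<longlonglongrightarrow> 1 / Gamma (1 + x)"
    by simp
  have ev2: "\<forall>\<^sub>F n in sequentially. AA x (Suc n) / real n powr x * (real n / real (Suc n)) powr x =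
         AA x (Suc n) / real (Suc n) powr x"
    using eventually_ge_at_top[of 1]
    by (eventually_elim) (simp add: powr_divide field_simps del: of_nat_Suc)
  have "(\<lambda>n. AA x (Suc n) / real (Suc n) powr x) \<longlonglongrightarrow> 1 / Gamma (1 + x)"
    by (rule Lim_transform_eventually[OF lim3 ev2])
  then show ?thesis by (rule LIMSEQ_imp_Suc)
qed

lemma AA_zero[simp]: "AA 0 n = 1" by (simp add: AA_def)

lemma one_plus_powr_le:
  fixes p x :: real
  assumes "0 < p" "p < 1" "x \<ge> 0"
  shows "(1 + x) powr p \<le> 1 + p * x"
  using Youngs_inequality_0[of p "1 - p" "1 + x" 1] assms by (simp add: algebra_simps)

lemma AA_ge_powr:
  assumes "0 < p" "p < 1" "n \<ge> 1"
  shows "AA p n \<ge> real n powr p"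
  using assms(3)
proof (induction n rule: dec_induct)
  case (step n)
  have e: "real (Suc n) = real n * (1 + 1 / real n)" using step.hyps by (simp add: field_simps)
  have "real (Suc n) powr p = real n powr p * (1 + 1 / real n) powr p"
    by (subst e) (simp add: powr_mult)
  also have "\<dots> \<le> AA p n * (1 + p / real n)"
    using one_plus_powr_le[OF assms(1,2), of "1 / real n"] step AA_pos[of p n] assms(1)
    by (intro mult_mono) auto
  also have "\<dots> = AA p (Suc n)" using step.hyps by (simp add: AA_Suc)
  finally show ?case .
qed simp

lemma AA_neg_le:
  assumes "0 \<le> y" "y \<le> 1" "n \<ge> 1"
  shows "AA (- y) n \<le> real n powr (- y)"
proof -
  have "AA (- y) n \<le> (\<Prod>j=1..<n. exp (- y / real j))"
    unfolding AA_def
  proof (intro prod_mono conjI)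
    fix j assume j: "j \<in> {1..<n}"
    then have "y / real j \<le> 1" using assms by (auto simp: field_simps)
    then show "0 \<le> 1 + - y / real j" by simp
    show "1 + - y / real j \<le> exp (- y / real j)" using exp_ge_add_one_self[of "- y / real j"] by simp
  qed
  also have "\<dots> = exp (- y * (\<Sum>j=1..<n. 1 / real j))"
    by (simp add: exp_sum[symmetric] sum_distrib_left)
  also have "(\<Sum>j=1..<n. 1 / real j) = harm (n - 1)"
    using assms(3) unfolding harm_def by (intro sum.cong) (auto simp: divide_inverse)
  also have "exp (- y * harm (n - 1)) \<le> exp (- y * ln (real n))"
    using ln_le_harm[of "n - 1"] assms by (subst exp_le_cancel_iff, intro mult_left_mono_neg) (auto simp: of_nat_diff)
  also have "\<dots> = real n powr (- y)" using assms by (simp add: powr_def)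
  finally show ?thesis .
qed

lemma AA_mult_le:
  assumes "0 \<le> p"
  shows "AA (real k * p) n \<le> AA p n ^ k"
  unfolding AA_def prod_power_distrib
proof (intro prod_mono conjI)
  fix j assume "j \<in> {1..<n}"
  then show "0 \<le> 1 + real k * p / real j" using assms by simp
  show "1 + real k * p / real j \<le> (1 + p / real j) ^ k"
  proof -
    have h: "0 \<le> p / real j" using assms by simp
    have "1 + real k * (p / real j) \<le> (1 + p / real j) ^ k"
      by (rule Bernoulli_inequality) (use h in linarith)
    then show ?thesis by simp
  qed
qed

lemma sum_inv_sq_le: "S \<ge> 1 \<Longrightarrow> (\<Sum>j=1..<S. 1 / real j ^ 2) \<le> 2 - 2 / real S"
proof (induction S rule: dec_induct)
  case (step S)
  have "(\<Sum>j=1..<Suc S. 1 / real j ^ 2) = (\<Sum>j=1..<S. 1 / real j ^ 2) + 1 / real S ^ 2"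
    using step.hyps by (simp add: sum.atLeastLessThan_Suc)
  also have "\<dots> \<le> 2 - 2 / real S + 1 / real S ^ 2" using step.IH by simp
  also have "\<dots> \<le> 2 - 2 / real (Suc S)"
  proof -
    have S: "real S \<ge> 1" using step.hyps by simp
    have sq: "real S \<le> real S * real S" using S mult_left_mono[of 1 "real S" "real S"] by simp
    have e0: "2 / real S - 2 / (real S + 1) = 2 / (real S * (real S + 1))" using S by (simp add: field_simps)
    have e: "2 / real S - 2 / real (Suc S) = 2 / (real S * (real S + 1))" using e0 by (simp add: add.commute)
    have w: "real S * (real S + 1) \<le> 2 * real S ^ 2" using sq by (simp add: power2_eq_square algebra_simps)
    have "2 / (2 * real S ^ 2) \<le> 2 / (real S * (real S + 1))"
      by (rule frac_le) (use S w in auto)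
    then have "1 / real S ^ 2 \<le> 2 / (real S * (real S + 1))" by simp
    then have "1 / real S ^ 2 \<le> 2 / real S - 2 / real (Suc S)" unfolding e .
    then show ?thesis by simp
  qed
  finally show ?case .
qed simp

lemma harm_le_1_ln: "m \<ge> 1 \<Longrightarrow> harm m \<le> 1 + ln (real m)"
proof -
  assume m: "m \<ge> 1"
  obtain k where k: "m = Suc k" using m by (cases m) auto
  have "harm (Suc k) - ln (real (Suc k)) \<le> harm (Suc 0) - ln (real (Suc 0))"
    using decseq_harm_diff_ln unfolding decseq_def by (metis le0)
  then show ?thesis using k by (simp add: harm_def)
qed

lemma GG_lower:
  assumes "0 < s" "s \<le> 1/2"
  shows "GG s S \<ge> exp (- s - 4 * s ^ 2) * (real S + 1) powr (- s)"
proof (cases "S \<ge> 1")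
  case False
  then have "S = 0" by simp
  moreover have "- s - 4 * s ^ 2 \<le> 0" using assms by (smt (verit) zero_le_power2)
  then have "exp (- s - 4 * s ^ 2) \<le> 1" by simp
  ultimately show ?thesis by (simp add: GG_def)
next
  case True
  have "(\<Prod>j=1..<S. exp (- (s / real j) - 2 * (s / real j) ^ 2)) \<le> GG s S"
    unfolding GG_def
  proof (intro prod_mono conjI)
    fix j assume j: "j \<in> {1..<S}"
    then have x: "0 \<le> s / real j" "s / real j \<le> 1/2" using assms by (auto simp: field_simps)
    have x3: "s / real j < 1" using x(2) by linarith
    have "exp (- (s / real j) - 2 * (s / real j) ^ 2) \<le> exp (ln (1 - s / real j))"
      using ln_one_minus_pos_lower_bound[OF x] by simp
    also have "exp (ln (1 - s / real j)) = 1 - s / real j" using x3 by simp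
    finally show "exp (- (s / real j) - 2 * (s / real j) ^ 2) \<le> 1 - s / real j" .
  qed simp
  note P = this
  have eqP: "(\<Prod>j=1..<S. exp (- (s / real j) - 2 * (s / real j) ^ 2))
      = exp (- s * (\<Sum>j=1..<S. 1 / real j) - 2 * s ^ 2 * (\<Sum>j=1..<S. 1 / real j ^ 2))"
    by (simp add: exp_sum[symmetric] sum_distrib_left sum_subtractf power_divide)
  have H1: "(\<Sum>j=1..<S. 1 / real j) \<le> 1 + ln (real S)"
  proof (cases "S = 1")
    case True then show ?thesis by simp
  next
    case False
    have "(\<Sum>j=1..<S. 1 / real j) = harm (S - 1)"
      unfolding harm_def by (intro sum.cong) (auto simp: divide_inverse)
    also have "\<dots> \<le> 1 + ln (real (S - 1))" using False True by (intro harm_le_1_ln) auto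
    also have "\<dots> \<le> 1 + ln (real S)" using False True by (simp add: of_nat_diff)
    finally show ?thesis .
  qed
  have H2: "(\<Sum>j=1..<S. 1 / real j ^ 2) \<le> 2"
  proof -
    have "0 \<le> 2 / real S" by simp
    then show ?thesis using sum_inv_sq_le[OF True] by linarith
  qed
  have m1: "s * (\<Sum>j=1..<S. 1 / real j) \<le> s * (1 + ln (real S))"
    by (rule mult_left_mono[OF H1]) (use assms in auto)
  have m2: "s ^ 2 * (\<Sum>j=1..<S. 1 / real j ^ 2) \<le> s ^ 2 * 2"
    by (rule mult_left_mono[OF H2]) auto
  have "exp (- s * (1 + ln (real S)) - 2 * s ^ 2 * 2)
      \<le> exp (- s * (\<Sum>j=1..<S. 1 / real j) - 2 * s ^ 2 * (\<Sum>j=1..<S. 1 / real j ^ 2))"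
    using m1 m2 by simp
  also have "\<dots> \<le> GG s S" using P eqP by simp
  finally have G1: "exp (- s * (1 + ln (real S)) - 2 * s ^ 2 * 2) \<le> GG s S" .

  have G2: "exp (- s * (1 + ln (real S)) - 2 * s ^ 2 * 2) = exp (- s - 4 * s ^ 2) * real S powr (- s)"
    using True by (simp add: powr_def exp_add[symmetric] exp_diff algebra_simps)
  have G3: "(real S + 1) powr (- s) \<le> real S powr (- s)"
    using True assms by (intro powr_mono2') auto
  have "exp (- s - 4 * s ^ 2) * (real S + 1) powr (- s) \<le> exp (- s - 4 * s ^ 2) * real S powr (- s)"
    by (rule mult_left_mono[OF G3]) simp
  then show ?thesis using G1 G2 by linarith
qed

lemma term_le_exp: "(x::real) \<ge> 0 \<Longrightarrow> x ^ m / fact m \<le> exp x"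
proof -
  assume x: "x \<ge> 0"
  have "(\<Sum>n\<in>{m}. inverse (fact n) * x ^ n) \<le> (\<Sum>n. inverse (fact n) * x ^ n)"
    by (rule sum_le_suminf[OF summable_exp]) (use x in auto)
  then show ?thesis by (simp add: exp_def divide_inverse mult.commute scaleR_conv_of_real)
qed

lemma summable_ML:
  assumes p: "0 < p" and c: "0 \<le> c"
  shows "summable (\<lambda>k. c ^ k / Gamma (1 + real k * p))"
proof -
  define B where "B = max 1 c"
  define D where "D = B powr (1 / p)"
  define E where "E = (2::real) powr (1 / p)"
  define K where "K = D * E * exp (D * E)"
  have B1: "B \<ge> 1" and Bc: "c \<le> B" unfolding B_def by auto
  have D0: "D > 0" and E0: "E > 0" unfolding D_def E_def using B1 by auto
  have bound: "c ^ k / Gamma (1 + real k * p) \<le> K * (1/2) ^ k" if kp: "real k * p \<ge> 1" for k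
  proof -
    define m where "m = nat \<lfloor>real k * p\<rfloor>"
    have m1: "real m \<le> real k * p" "real k * p < real m + 1" unfolding m_def using kp by linarith+
    have mge: "m \<ge> 1" unfolding m_def using kp by linarith
    have k_le: "real k \<le> (real m + 1) / p" using m1 p by (simp add: field_simps)
    have k_ge: "real k \<ge> real m / p" using m1 p by (simp add: field_simps)
    have gf: "Gamma (1 + real m) = (fact m :: real)" by (rule Gamma_fact)
    have G: "fact m \<le> Gamma (1 + real k * p)"
    proof (cases "real m = real k * p")
      case True
      then show ?thesis using gf by simp
    next
      case False
      then have "Gamma (1 + real m) < Gamma (1 + real k * p)"
        using m1 mge by (intro Gamma_real_strict_mono) auto
      then show ?thesis using gf by simp
    qed
    have fpos: "(0::real) < fact m" by simp
    have "c ^ k \<le> B ^ k" using c Bc by (intro power_mono) auto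
    also have "\<dots> = B powr real k" using B1 by (simp add: powr_realpow)
    also have "\<dots> \<le> B powr ((real m + 1) / p)" using B1 k_le by (intro powr_mono) auto
    also have "\<dots> = D powr real (m + 1)"
      unfolding D_def using B1 by (simp add: powr_powr add.commute)
    also have "\<dots> = D ^ (m + 1)" using D0 by (rule powr_realpow)
    finally have ck: "c ^ k \<le> D ^ (m + 1)" .
    have "c ^ k / Gamma (1 + real k * p) \<le> D ^ (m + 1) / fact m"
      using ck G fpos c D0 by (intro frac_le) auto
    also have "\<dots> = D * ((D * E) ^ m / fact m) / E ^ m"
      using E0 by (simp add: power_mult_distrib)
    also have "\<dots> \<le> D * exp (D * E) / E ^ m"
      using D0 E0 term_le_exp[of "D * E" m] by (intro divide_right_mono mult_left_mono) auto
    also have "\<dots> = K / E ^ (m + 1)" unfolding K_def using E0 by simp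
    also have "\<dots> \<le> K * (1/2) ^ k"
    proof -
      have "E ^ (m + 1) = E powr real (m + 1)" using E0 by (rule powr_realpow[symmetric])
      also have "\<dots> = 2 powr ((real m + 1) / p)"
        unfolding E_def by (simp add: powr_powr add.commute)
      finally have "E ^ (m + 1) = 2 powr ((real m + 1) / p)" .
      also have "\<dots> \<ge> 2 powr real k" using k_le by (intro powr_mono) auto
      finally have "E ^ (m + 1) \<ge> 2 ^ k" by (simp add: powr_realpow)
      moreover have "K \<ge> 0" unfolding K_def using D0 E0 by simp
      ultimately have "K / E ^ (m + 1) \<le> K / 2 ^ k"
        using E0 by (intro divide_left_mono) auto
      then show ?thesis by (simp add: power_divide)
    qed
    finally show ?thesis .
  qed
  have ev: "eventually (\<lambda>k. real k * p \<ge> 1) sequentially"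
  proof -
    obtain N :: nat where "real N \<ge> 1 / p" using real_arch_simple by blast
    then have "\<forall>k\<ge>N. real k * p \<ge> 1" using p by (auto simp: field_simps intro: order_trans[of _ "real N * p"])
    then show ?thesis by (auto simp: eventually_at_top_linorder)
  qed
  show ?thesis
  proof (rule summable_comparison_test_ev)
    show "eventually (\<lambda>k. norm (c ^ k / Gamma (1 + real k * p)) \<le> K * (1/2) ^ k) sequentially"
      using ev
    proof eventually_elim
      case (elim k)
      have "0 \<le> real k * p" using p by simp
      then have "Gamma (1 + real k * p) > 0" by (intro Gamma_real_pos) linarith
      then have "norm (c ^ k / Gamma (1 + real k * p)) = c ^ k / Gamma (1 + real k * p)"
        using c by simp
      then show ?case using bound[OF elim] by simp
    qed
    show "summable (\<lambda>k. K * (1/2::real) ^ k)"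
      by (intro summable_mult summable_geometric) auto
  qed
qed

lemma trunc_le: "(y::real) \<ge> 0 \<Longrightarrow> T > 0 \<Longrightarrow> y - min y T \<le> y ^ 2 / T"
proof -
  assume y: "y \<ge> 0" and T: "T > 0"
  show ?thesis
  proof (cases "y \<le> T")
    case True then show ?thesis using y T by simp
  next
    case False
    then have "y * T \<le> y * y" using y by (intro mult_left_mono) auto
    then have "y \<le> y ^ 2 / T" using T by (simp add: field_simps power2_eq_square)
    moreover have "min y T = T" using False by simp
    ultimately show ?thesis using T by linarith
  qed
qed

lemma abs_le_sq: "\<bar>y::real\<bar> \<le> 1 + y ^ 2"
proof -
  have "0 \<le> (\<bar>y\<bar> - 1)^2" by simp
  also have "(\<bar>y\<bar> - 1)^2 = y^2 - 2 * \<bar>y\<bar> + 1" by (simp add: power2_diff power2_abs)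
  finally show ?thesis using zero_le_power2[of y] by linarith
qed

lemma ui_limit:
  fixes f :: "nat \<Rightarrow> 'a \<Rightarrow> real"
  assumes ps: "prob_space M"
    and f[measurable]: "\<And>n. f n \<in> borel_measurable M" and g[measurable]: "g \<in> borel_measurable M"
    and lim: "AE x in M. (\<lambda>n. f n x) \<longlonglongrightarrow> g x"
    and nn: "\<And>n x. x \<in> space M \<Longrightarrow> f n x \<ge> 0"
    and intf: "\<And>n. integrable M (f n)"
    and int2: "\<And>n. integrable M (\<lambda>x. (f n x)^2)"
    and bnd: "\<And>n. integral\<^sup>L M (\<lambda>x. (f n x)^2) \<le> B"
  shows "integrable M g \<and> (\<lambda>n. integral\<^sup>L M (f n)) \<longlonglongrightarrow> integral\<^sup>L M g"
proof -
  interpret prob_space M by (rule ps)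
  have gnn: "AE x in M. g x \<ge> 0"
    using lim AE_space
  proof eventually_elim
    case (elim x)
    show ?case by (rule LIMSEQ_le_const[OF elim(1)]) (use nn elim(2) in auto)
  qed
  have "integral\<^sup>L M (\<lambda>x. (f 0 x)^2) \<ge> 0" by (rule integral_nonneg_AE) auto
  then have B0: "B \<ge> 0" using bnd[of 0] by linarith
  have fatou: "(\<integral>\<^sup>+x. ennreal ((g x)^2) \<partial>M) \<le> ennreal B"
  proof -
    have "(\<integral>\<^sup>+x. ennreal ((g x)^2) \<partial>M) = (\<integral>\<^sup>+x. liminf (\<lambda>n. ennreal ((f n x)^2)) \<partial>M)"
    proof (rule nn_integral_cong_AE)
      show "AE x in M. ennreal ((g x)^2) = liminf (\<lambda>n. ennreal ((f n x)^2))"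
        using lim
      proof eventually_elim
        case (elim x)
        then have "(\<lambda>n. ennreal ((f n x)^2)) \<longlonglongrightarrow> ennreal ((g x)^2)"
          by (intro tendsto_intros)
        then show ?case by (metis lim_imp_Liminf trivial_limit_sequentially)
      qed
    qed
    also have "\<dots> \<le> liminf (\<lambda>n. \<integral>\<^sup>+x. ennreal ((f n x)^2) \<partial>M)"
      by (rule nn_integral_liminf) measurable
    also have "\<dots> \<le> ennreal B"
    proof -
      have "(\<integral>\<^sup>+x. ennreal ((f n x)^2) \<partial>M) \<le> ennreal B" for n
        using bnd[of n] int2[of n] by (subst nn_integral_eq_integral) (auto intro: ennreal_leI)
      then have "limsup (\<lambda>n. \<integral>\<^sup>+x. ennreal ((f n x)^2) \<partial>M) \<le> ennreal B"
        by (intro Limsup_bounded) auto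
      then show ?thesis using Liminf_le_Limsup[of sequentially] by (meson order_trans trivial_limit_sequentially)
    qed
    finally show ?thesis .
  qed
  have intg2: "integrable M (\<lambda>x. (g x)^2)"
    by (rule integrableI_bounded) (use fatou in \<open>auto simp: less_top[symmetric] top_unique\<close>)
  have intg2B: "integral\<^sup>L M (\<lambda>x. (g x)^2) \<le> B"
    using fatou intg2 B0 by (subst (asm) nn_integral_eq_integral) (auto simp: ennreal_le_iff)
  have intg: "integrable M g"
  proof (rule Bochner_Integration.integrable_bound[of _ "\<lambda>x. 1 + (g x)^2"])
    show "integrable M (\<lambda>x. 1 + (g x)^2)" using intg2 by simp
    show "AE x in M. norm (g x) \<le> norm (1 + (g x)^2)"
    proof (rule AE_I2)
      fix x
      have "\<bar>g x\<bar> \<le> 1 + (g x)^2" by (rule abs_le_sq)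
      then show "norm (g x) \<le> norm (1 + (g x)^2)" by simp
    qed
  qed simp
  have conv: "(\<lambda>n. integral\<^sup>L M (f n)) \<longlonglongrightarrow> integral\<^sup>L M g"
  proof (rule LIMSEQ_I)
    fix r :: real assume r: "r > 0"
    define T where "T = 4 * (B + 1) / r"
    have T: "T > 0" using r B0 by (simp add: T_def)
    have BT: "B / T < r / 4" using r B0 by (simp add: T_def field_simps)
    have dct: "(\<lambda>n. integral\<^sup>L M (\<lambda>x. min (f n x) T)) \<longlonglongrightarrow> integral\<^sup>L M (\<lambda>x. min (g x) T)"
    proof (rule integral_dominated_convergence[where w="\<lambda>_. T"])
      show "AE x in M. (\<lambda>n. min (f n x) T) \<longlonglongrightarrow> min (g x) T"
        using lim by eventually_elim (intro tendsto_intros)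
      show "\<And>n. AE x in M. norm (min (f n x) T) \<le> T"
        using nn T by (auto intro!: AE_I2)
    qed auto
    then obtain N where N: "\<And>n. n \<ge> N \<Longrightarrow> norm (integral\<^sup>L M (\<lambda>x. min (f n x) T) - integral\<^sup>L M (\<lambda>x. min (g x) T)) < r / 2"
      using LIMSEQ_D[OF dct, of "r/2"] r by auto
    have tailf: "integral\<^sup>L M (\<lambda>x. f n x - min (f n x) T) \<le> B / T" for n
    proof -
      have "integral\<^sup>L M (\<lambda>x. f n x - min (f n x) T) \<le> integral\<^sup>L M (\<lambda>x. (f n x)^2 / T)"
        using nn T by (intro integral_mono_AE) (auto intro!: integrable_diff intf int2 trunc_le AE_I2)
      also have "\<dots> = integral\<^sup>L M (\<lambda>x. (f n x)^2) / T" by simp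
      also have "\<dots> \<le> B / T" using bnd[of n] T by (simp add: divide_right_mono)
      finally show ?thesis .
    qed
    have tailg: "integral\<^sup>L M (\<lambda>x. g x - min (g x) T) \<le> B / T"
    proof -
      have "integral\<^sup>L M (\<lambda>x. g x - min (g x) T) \<le> integral\<^sup>L M (\<lambda>x. (g x)^2 / T)"
        using gnn T by (intro integral_mono_AE) (auto intro!: integrable_diff intg intg2 trunc_le elim: AE_mp)
      also have "\<dots> = integral\<^sup>L M (\<lambda>x. (g x)^2) / T" by simp
      also have "\<dots> \<le> B / T" using intg2B T by (simp add: divide_right_mono)
      finally show ?thesis .
    qed
    have nng: "integral\<^sup>L M (\<lambda>x. g x - min (g x) T) \<ge> 0"
      by (intro integral_nonneg_AE) auto
    have nnf: "integral\<^sup>L M (\<lambda>x. f n x - min (f n x) T) \<ge> 0" for n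
      by (intro integral_nonneg_AE) auto
    show "\<exists>no. \<forall>n\<ge>no. norm (integral\<^sup>L M (f n) - integral\<^sup>L M g) < r"
    proof (intro exI allI impI)
      fix n assume n: "n \<ge> N"
      have im1: "integrable M (\<lambda>x. min (f n x) T)"
        by (rule Bochner_Integration.integrable_bound[where f="\<lambda>_. T"]) (use nn T in \<open>auto intro!: AE_I2\<close>)
      have aeT: "AE x in M. norm (min (g x) T) \<le> norm T" using gnn by eventually_elim (use T in auto)
      have im2: "integrable M (\<lambda>x. min (g x) T)"
        by (rule Bochner_Integration.integrable_bound[where f="\<lambda>_. T", OF _ _ aeT]) simp_all
      note im = im1 im2
      have "integral\<^sup>L M (f n) - integral\<^sup>L M g
          = (integral\<^sup>L M (\<lambda>x. min (f n x) T) - integral\<^sup>L M (\<lambda>x. min (g x) T))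
            + integral\<^sup>L M (\<lambda>x. f n x - min (f n x) T) - integral\<^sup>L M (\<lambda>x. g x - min (g x) T)"
        using im intf intg by (simp add: Bochner_Integration.integral_diff)
      moreover have "- (r / 2) < integral\<^sup>L M (\<lambda>x. min (f n x) T) - integral\<^sup>L M (\<lambda>x. min (g x) T)
         \<and> integral\<^sup>L M (\<lambda>x. min (f n x) T) - integral\<^sup>L M (\<lambda>x. min (g x) T) < r / 2"
        using N[OF n] unfolding real_norm_def abs_less_iff by simp
      ultimately show "norm (integral\<^sup>L M (f n) - integral\<^sup>L M g) < r"
        unfolding real_norm_def abs_less_iff using tailf[of n] tailg nng nnf[of n] BT
        by (intro conjI) linarith+
    qed
  qed
  show ?thesis using intg conv by blast
qed

lemma sandwich_subseq:
  fixes h a :: "nat \<Rightarrow> real" and N :: "nat \<Rightarrow> nat"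
  assumes hmono: "\<And>n m. n \<le> m \<Longrightarrow> h n \<le> h m" and hnn: "\<And>n. h n \<ge> 0"
    and amono: "\<And>n m. n \<le> m \<Longrightarrow> a n \<le> a m" and apos: "\<And>n. a n > 0"
    and Nmono: "strict_mono N"
    and conv: "(\<lambda>j. h (N j) / a (N j)) \<longlonglongrightarrow> L"
    and ratio: "(\<lambda>j. a (N (Suc j)) / a (N j)) \<longlonglongrightarrow> 1"
  shows "(\<lambda>n. h n / a n) \<longlonglongrightarrow> L"
proof -
  have ex: "\<exists>j. N j \<le> n \<and> n < N (Suc j)" if n: "N 0 \<le> n" for n
  proof (rule ccontr)
    assume "\<not> ?thesis"
    then have step: "N j \<le> n \<Longrightarrow> N (Suc j) \<le> n" for j by (meson not_le)
    have "N j \<le> n" for j by (induction j) (use n step in auto)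
    moreover have "Suc n \<le> N (Suc n)" using Nmono by (rule strict_mono_imp_increasing)
    ultimately show False using le_trans not_less_eq_eq by blast
  qed
  define J where "J n = (SOME j. N j \<le> n \<and> n < N (Suc j))" for n
  have J: "N (J n) \<le> n" "n < N (Suc (J n))" if "N 0 \<le> n" for n
    using someI_ex[OF ex[OF that]] unfolding J_def by blast+
  have Jlim: "filterlim J at_top sequentially"
  proof (subst filterlim_at_top, intro allI)
    fix j0
    show "eventually (\<lambda>n. j0 \<le> J n) sequentially"
      using eventually_ge_at_top[of "N j0"]
    proof eventually_elim
      case (elim n)
      have n0: "N 0 \<le> n" using elim strict_mono_less_eq[OF Nmono, of 0 j0] by simp
      have "N j0 < N (Suc (J n))" using elim J(2)[OF n0] by simp
      then have "j0 < Suc (J n)" using strict_mono_less[OF Nmono] by blast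
      then show ?case by simp
    qed
  qed
  have inv: "(\<lambda>j. a (N j) / a (N (Suc j))) \<longlonglongrightarrow> 1"
  proof -
    have "(\<lambda>j. inverse (a (N (Suc j)) / a (N j))) \<longlonglongrightarrow> inverse 1"
      by (intro tendsto_inverse ratio) simp
    then show ?thesis by simp
  qed
  have low: "(\<lambda>j. h (N j) / a (N j) * (a (N j) / a (N (Suc j)))) \<longlonglongrightarrow> L * 1"
    by (intro tendsto_mult conv inv)
  have upp: "(\<lambda>j. h (N (Suc j)) / a (N (Suc j)) * (a (N (Suc j)) / a (N j))) \<longlonglongrightarrow> L * 1"
    by (intro tendsto_mult ratio) (rule LIMSEQ_Suc[OF conv])
  have low2: "(\<lambda>n. h (N (J n)) / a (N (J n)) * (a (N (J n)) / a (N (Suc (J n))))) \<longlonglongrightarrow> L"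
    using filterlim_compose[OF low Jlim] by (simp add: o_def)
  have upp2: "(\<lambda>n. h (N (Suc (J n))) / a (N (Suc (J n))) * (a (N (Suc (J n))) / a (N (J n)))) \<longlonglongrightarrow> L"
    using filterlim_compose[OF upp Jlim] by (simp add: o_def)
  show ?thesis
  proof (rule tendsto_sandwich[OF _ _ low2 upp2])
    show "eventually (\<lambda>n. h (N (J n)) / a (N (J n)) * (a (N (J n)) / a (N (Suc (J n)))) \<le> h n / a n) sequentially"
      using eventually_ge_at_top[of "N 0"]
    proof eventually_elim
      case (elim n)
      note JJ = J[OF elim]
      have "h (N (J n)) / a (N (J n)) * (a (N (J n)) / a (N (Suc (J n)))) = h (N (J n)) / a (N (Suc (J n)))"
        using apos[of "N (J n)"] by simp
      also have "\<dots> \<le> h n / a n"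
        using hmono[OF JJ(1)] amono[of n "N (Suc (J n))"] JJ(2) apos[of n] hnn[of "N (J n)"]
        by (intro frac_le) auto
      finally show ?case .
    qed
    show "eventually (\<lambda>n. h n / a n \<le> h (N (Suc (J n))) / a (N (Suc (J n))) * (a (N (Suc (J n))) / a (N (J n)))) sequentially"
      using eventually_ge_at_top[of "N 0"]
    proof eventually_elim
      case (elim n)
      note JJ = J[OF elim]
      have "h n / a n \<le> h (N (Suc (J n))) / a (N (J n))"
        using hmono[of n "N (Suc (J n))"] JJ amono[OF JJ(1)] apos[of "N (J n)"] hnn[of n]
        by (intro frac_le) auto
      also have "\<dots> = h (N (Suc (J n))) / a (N (Suc (J n))) * (a (N (Suc (J n))) / a (N (J n)))"
        using apos[of "N (Suc (J n))"] by simp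
      finally show ?case .
    qed
  qed
qed

locale setting =
  fixes M :: "'a measure" and X :: "nat \<Rightarrow> 'a \<Rightarrow> nat" and p :: real
  assumes ps: "prob_space M"
    and p0: "0 < p" and p1: "p < 1"
    and meas: "\<And>i. X i \<in> M \<rightarrow>\<^sub>M count_space UNIV"
    and law: "\<And>n xs. length xs = n \<Longrightarrow>
               measure M {\<omega>\<in>space M. \<forall>i<n. X (Suc i) \<omega> = xs ! i} = pmf (proc_pmf p n) xs"
begin

interpretation prob_space M by (rule ps)

lemmas meas'[measurable] = meas

definition V :: "nat \<Rightarrow> 'a \<Rightarrow> nat list" where
  "V n \<omega> = map (\<lambda>i. X (Suc i) \<omega>) [0..<n]"

lemma length_V[simp]: "length (V n \<omega>) = n" by (simp add: V_def)

lemma V_eq_iff: "length xs = n \<Longrightarrow> V n \<omega> = xs \<longleftrightarrow> (\<forall>i<n. X (Suc i) \<omega> = xs ! i)"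
  by (auto simp: V_def list_eq_iff_nth_eq)

lemma meas_V[measurable]: "V n \<in> M \<rightarrow>\<^sub>M count_space UNIV"
proof (subst measurable_count_space_eq2_countable, safe)
  fix xs :: "nat list"
  show "V n -` {xs} \<inter> space M \<in> sets M"
  proof (cases "length xs = n")
    case True
    have "V n -` {xs} \<inter> space M = {\<omega>\<in>space M. \<forall>i<n. X (Suc i) \<omega> = xs ! i}"
      using V_eq_iff[OF True] by auto
    also have "\<dots> \<in> sets M"
      by measurable
    finally show ?thesis .
  next
    case False
    then have "V n -` {xs} \<inter> space M = {}" by auto
    then show ?thesis by simp
  qed
qed auto

lemma distr_V: "distr M (count_space UNIV) (V n) = measure_pmf (proc_pmf p n)"
proof (rule measure_eqI_countable[where A=UNIV])
  fix xs :: "nat list"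
  show "emeasure (distr M (count_space UNIV) (V n)) {xs} = emeasure (measure_pmf (proc_pmf p n)) {xs}"
  proof (cases "length xs = n")
    case True
    have "emeasure (distr M (count_space UNIV) (V n)) {xs} = emeasure M (V n -` {xs} \<inter> space M)"
      by (rule emeasure_distr) auto
    also have "V n -` {xs} \<inter> space M = {\<omega>\<in>space M. \<forall>i<n. X (Suc i) \<omega> = xs ! i}"
      using V_eq_iff[OF True] by auto
    also have "emeasure M \<dots> = ennreal (pmf (proc_pmf p n) xs)"
      using law[OF True] by (simp add: emeasure_eq_measure)
    finally show ?thesis by (simp add: emeasure_pmf_single)
  next
    case False
    have "emeasure (distr M (count_space UNIV) (V n)) {xs} = emeasure M (V n -` {xs} \<inter> space M)"
      by (rule emeasure_distr) auto
    also have "V n -` {xs} \<inter> space M = {}" using False by auto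
    moreover have "xs \<notin> set_pmf (proc_pmf p n)" using proc_support False unfolding L01_def by blast
    ultimately show ?thesis by (simp add: emeasure_pmf_single set_pmf_eq)
  qed
qed auto

lemma integral_V: "integral\<^sup>L M (\<lambda>\<omega>. F (V n \<omega>)) = EE p n (F :: nat list \<Rightarrow> real)"
proof -
  have "EE p n F = integral\<^sup>L (distr M (count_space UNIV) (V n)) F" by (simp add: distr_V)
  also have "\<dots> = integral\<^sup>L M (\<lambda>\<omega>. F (V n \<omega>))" by (rule integral_distr) auto
  finally show ?thesis ..
qed

lemma integrable_V: "integrable M (\<lambda>\<omega>. (F :: nat list \<Rightarrow> real) (V n \<omega>))"
proof -
  have "integrable (distr M (count_space UNIV) (V n)) F" by (simp add: distr_V integrable_EE)
  then show ?thesis by (subst (asm) integrable_distr_eq) auto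
qed

lemma AE_V: "AE \<omega> in M. V n \<omega> \<in> set_pmf (proc_pmf p n)"
proof -
  have "AE xs in distr M (count_space UNIV) (V n). xs \<in> set_pmf (proc_pmf p n)"
    unfolding distr_V by (simp add: AE_measure_pmf_iff)
  then show ?thesis by (subst (asm) AE_distr_iff) auto
qed

definition HH :: "nat \<Rightarrow> 'a \<Rightarrow> real" where
  "HH n \<omega> = real (sum_list (V n \<omega>))"

lemma HH_eq: "(\<Sum>i=1..n. real (X i \<omega>)) = HH n \<omega>"
  by (induction n) (auto simp: HH_def V_def)

lemma HH_meas[measurable]: "HH n \<in> borel_measurable M"
  unfolding HH_def by measurable

lemma HH_nonneg: "HH n \<omega> \<ge> 0" by (simp add: HH_def)

lemma HH_mono: "n \<le> m \<Longrightarrow> HH n \<omega> \<le> HH m \<omega>"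
  unfolding HH_eq[symmetric] by (intro sum_mono2) auto

end

lemma poch_nonneg0: "(S::real) \<ge> 0 \<Longrightarrow> pochhammer S k \<ge> 0"
  unfolding pochhammer_prod by (intro prod_nonneg) auto

lemma pow_le_poch: "(S::real) \<ge> 0 \<Longrightarrow> S ^ k \<le> pochhammer S k"
proof (induction k)
  case (Suc k)
  have "S ^ Suc k = S ^ k * S" by (simp add: mult.commute)
  also have "\<dots> \<le> pochhammer S k * (S + real k)"
    using Suc by (intro mult_mono) (auto simp: poch_nonneg0)
  also have "\<dots> = pochhammer S (Suc k)" by (simp add: pochhammer_rec' mult.commute)
  finally show ?case .
qed simp

lemma poch_le_pow: "(S::real) \<ge> 0 \<Longrightarrow> pochhammer S (Suc k) \<le> S ^ Suc k + real k ^ 2 * pochhammer S k"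
proof (induction k)
  case 0 then show ?case by simp
next
  case (Suc k)
  have pk: "pochhammer S k \<ge> 0" "pochhammer S (Suc k) \<ge> 0" using Suc.prems by (auto simp: poch_nonneg0)
  have Sp: "S * pochhammer S k \<le> pochhammer S (Suc k)"
    using pk Suc.prems by (simp add: pochhammer_rec' mult_right_mono)
  have "pochhammer S (Suc (Suc k)) = S * pochhammer S (Suc k) + real (Suc k) * pochhammer S (Suc k)"
    by (simp add: pochhammer_rec'[of S "Suc k"] algebra_simps)
  also have "S * pochhammer S (Suc k) \<le> S * (S ^ Suc k + real k ^ 2 * pochhammer S k)"
    using Suc by (intro mult_left_mono) auto
  also have "\<dots> = S ^ Suc (Suc k) + real k ^ 2 * (S * pochhammer S k)" by (simp add: algebra_simps)
  also have "\<dots> \<le> S ^ Suc (Suc k) + real k ^ 2 * pochhammer S (Suc k)"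
    using Sp by (intro add_left_mono mult_left_mono) auto
  finally have "pochhammer S (Suc (Suc k)) \<le> S ^ Suc (Suc k) + (real k ^ 2 + real (Suc k)) * pochhammer S (Suc k)"
    by (simp add: algebra_simps)
  also have "\<dots> \<le> S ^ Suc (Suc k) + real (Suc k) ^ 2 * pochhammer S (Suc k)"
    using pk by (intro add_left_mono mult_right_mono) (auto simp: power2_eq_square algebra_simps)
  finally show ?case .
qed

lemma AA_asymp0:
  assumes "x \<ge> 0"
  shows "(\<lambda>n. AA x n / real n powr x) \<longlonglongrightarrow> 1 / Gamma (1 + x)"
proof (cases "x = 0")
  case True
  have "(\<lambda>n. AA x n / real n powr x) \<longlonglongrightarrow> 1"
    by (rule Lim_transform_eventually[OF tendsto_const]) (use eventually_gt_at_top[of 0] True in \<open>auto elim: eventually_mono\<close>)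
  then show ?thesis using True by simp
next
  case False then show ?thesis using AA_asymp[of x] assms by simp
qed

lemma mom_upper:
  assumes "0 \<le> p" "p \<le> 1" "n \<ge> 1"
  shows "EE p n (\<lambda>xs. real (sum_list xs) ^ k) \<le> fact k * AA (real k * p) n"
proof -
  have "EE p n (\<lambda>xs. real (sum_list xs) ^ k) \<le> EE p n (\<lambda>xs. pochhammer (real (sum_list xs)) k)"
    by (intro integral_mono integrable_EE pow_le_poch) auto
  then show ?thesis using EE_poch[OF assms] by simp
qed

lemma mom_lower:
  assumes "0 \<le> p" "p \<le> 1" "n \<ge> 1"
  shows "EE p n (\<lambda>xs. real (sum_list xs) ^ Suc k) \<ge>
     fact (Suc k) * AA (real (Suc k) * p) n - real k ^ 2 * (fact k * AA (real k * p) n)"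
proof -
  have "EE p n (\<lambda>xs. pochhammer (real (sum_list xs)) (Suc k))
      \<le> EE p n (\<lambda>xs. real (sum_list xs) ^ Suc k + real k ^ 2 * pochhammer (real (sum_list xs)) k)"
    by (intro integral_mono integrable_EE poch_le_pow) auto
  also have "\<dots> = EE p n (\<lambda>xs. real (sum_list xs) ^ Suc k) + real k ^ 2 * EE p n (\<lambda>xs. pochhammer (real (sum_list xs)) k)"
    by (simp add: integrable_EE)
  finally show ?thesis using EE_poch[OF assms, of k] EE_poch[OF assms, of "Suc k"] by simp
qed

lemma EE_mom_limit:
  assumes "0 < p" "p \<le> 1"
  shows "(\<lambda>n. EE p n (\<lambda>xs. real (sum_list xs) ^ Suc k) / real n powr (real (Suc k) * p))
     \<longlonglongrightarrow> fact (Suc k) / Gamma (1 + real (Suc k) * p)"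
proof -
  let ?x = "real (Suc k) * p" and ?y = "real k * p"
  have up: "(\<lambda>n. fact (Suc k) * (AA ?x n / real n powr ?x)) \<longlonglongrightarrow> fact (Suc k) * (1 / Gamma (1 + ?x))"
    using assms by (intro tendsto_intros AA_asymp0) auto
  have small: "(\<lambda>n. real k ^ 2 * fact k * (AA ?y n / real n powr ?y) * real n powr (- p)) \<longlonglongrightarrow>
      real k ^ 2 * fact k * (1 / Gamma (1 + ?y)) * 0"
    using assms by (intro tendsto_intros AA_asymp0 tendsto_neg_powr filterlim_real_sequentially) auto
  have low: "(\<lambda>n. fact (Suc k) * (AA ?x n / real n powr ?x) - real k ^ 2 * fact k * (AA ?y n / real n powr ?y) * real n powr (- p))
      \<longlonglongrightarrow> fact (Suc k) / Gamma (1 + ?x)"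
    using tendsto_diff[OF up small] by simp
  show ?thesis
  proof (rule tendsto_sandwich[OF _ _ low])
    show "(\<lambda>n. fact (Suc k) * (AA ?x n / real n powr ?x)) \<longlonglongrightarrow> fact (Suc k) / Gamma (1 + ?x)"
      using up by simp
    show "eventually (\<lambda>n. EE p n (\<lambda>xs. real (sum_list xs) ^ Suc k) / real n powr ?x \<le> fact (Suc k) * (AA ?x n / real n powr ?x)) sequentially"
      using eventually_ge_at_top[of 1]
    proof eventually_elim
      case (elim n)
      then show ?case using mom_upper[of p n "Suc k"] assms
        by (simp add: divide_right_mono)
    qed
    show "eventually (\<lambda>n. fact (Suc k) * (AA ?x n / real n powr ?x) - real k ^ 2 * fact k * (AA ?y n / real n powr ?y) * real n powr (- p)
        \<le> EE p n (\<lambda>xs. real (sum_list xs) ^ Suc k) / real n powr ?x) sequentially"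
      using eventually_ge_at_top[of 1]
    proof eventually_elim
      case (elim n)
      have n0: "real n > 0" using elim by simp
      have e: "real n powr ?y * real n powr p = real n powr ?x"
        by (simp add: powr_add[symmetric] algebra_simps)
      have "real k ^ 2 * fact k * (AA ?y n / real n powr ?y) * real n powr (- p)
          = real k ^ 2 * (fact k * AA ?y n) / real n powr ?x"
        using n0 e[symmetric] by (simp add: powr_minus field_simps)
      then have "fact (Suc k) * (AA ?x n / real n powr ?x) - real k ^ 2 * fact k * (AA ?y n / real n powr ?y) * real n powr (- p)
          = (fact (Suc k) * AA ?x n - real k ^ 2 * (fact k * AA ?y n)) / real n powr ?x"
        by (simp add: diff_divide_distrib)
      also have "\<dots> \<le> EE p n (\<lambda>xs. real (sum_list xs) ^ Suc k) / real n powr ?x"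
        using mom_lower[of p n k] assms elim by (intro divide_right_mono) auto
      finally show ?case .
    qed
  qed
qed

context setting
begin

interpretation prob_space M by (rule ps)

lemma V_take: "n \<le> m \<Longrightarrow> V n \<omega> = take n (V m \<omega>)"
  by (simp add: V_def take_map)

lemma HH_take: "n \<le> m \<Longrightarrow> HH n \<omega> = real (sum_list (take n (V m \<omega>)))"
  by (simp add: HH_def V_take)

lemma int_HH: "integral\<^sup>L M (\<lambda>\<omega>. g (HH n \<omega>)) = EE p n (\<lambda>xs. g (real (sum_list xs)))"
  unfolding HH_def by (rule integral_V)

lemma integrable_HH: "integrable M (\<lambda>\<omega>. g (HH n \<omega>) :: real)"
  unfolding HH_def by (rule integrable_V)

lemma p01: "0 \<le> p" "p \<le> 1" using p0 p1 by auto

lemma mom_limit: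
  assumes "k \<ge> 1"
  shows "(\<lambda>n. integral\<^sup>L M (\<lambda>\<omega>. (HH n \<omega> / real n powr p) ^ k)) \<longlonglongrightarrow> fact k / Gamma (1 + real k * p)"
proof -
  obtain k' where k: "k = Suc k'" using assms by (cases k) auto
  have lim: "(\<lambda>n. EE p n (\<lambda>xs. real (sum_list xs) ^ k) / real n powr (real k * p))
     \<longlonglongrightarrow> fact k / Gamma (1 + real k * p)"
    unfolding k using EE_mom_limit[of p k'] p01 p0 by simp
  show ?thesis
  proof (rule Lim_transform_eventually[OF lim])
    show "eventually (\<lambda>n. EE p n (\<lambda>xs. real (sum_list xs) ^ k) / real n powr (real k * p) =
        integral\<^sup>L M (\<lambda>\<omega>. (HH n \<omega> / real n powr p) ^ k)) sequentially"
      using eventually_gt_at_top[of 0]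
    proof eventually_elim
      case (elim n)
      have "integral\<^sup>L M (\<lambda>\<omega>. (HH n \<omega> / real n powr p) ^ k) = EE p n (\<lambda>xs. (real (sum_list xs) / real n powr p) ^ k)"
        by (rule int_HH)
      also have "\<dots> = EE p n (\<lambda>xs. real (sum_list xs) ^ k) / real n powr (real k * p)"
        using elim by (simp add: power_divide powr_power)
      finally show ?case ..
    qed
  qed
qed

lemma Lk_bound:
  assumes "k \<ge> 1"
  shows "integral\<^sup>L M (\<lambda>\<omega>. \<bar>HH n \<omega> / AA p n\<bar> ^ k) \<le> fact k"
proof (cases "n \<ge> 1")
  case False
  then have "n = 0" by simp
  then have "(\<lambda>\<omega>. \<bar>HH n \<omega> / AA p n\<bar> ^ k) = (\<lambda>\<omega>. 0)" using assms by (auto simp: HH_def V_def)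
  then show ?thesis by simp
next
  case True
  have pos: "AA p n > 0" using p0 by (intro AA_pos) auto
  have "integral\<^sup>L M (\<lambda>\<omega>. \<bar>HH n \<omega> / AA p n\<bar> ^ k) = EE p n (\<lambda>xs. \<bar>real (sum_list xs) / AA p n\<bar> ^ k)"
    by (rule int_HH)
  also have "\<dots> = EE p n (\<lambda>xs. real (sum_list xs) ^ k) / AA p n ^ k"
    using pos by (simp add: power_divide)
  also have "\<dots> \<le> fact k * AA (real k * p) n / AA p n ^ k"
    using mom_upper[OF p01 True, of k] pos by (intro divide_right_mono) auto
  also have "\<dots> \<le> fact k * AA p n ^ k / AA p n ^ k"
    using AA_mult_le[of p k n] p01 pos by (intro divide_right_mono mult_left_mono) auto
  also have "\<dots> = fact k" using pos by simp
  finally show ?thesis .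
qed

end

lemma AA_mono:
  assumes "0 \<le> p" "n \<le> m" shows "AA p n \<le> AA p m"
  using assms(2)
proof (induction m rule: dec_induct)
  case (step m)
  show ?case
  proof (cases "m \<ge> 1")
    case True
    have "AA p m \<le> AA p m * (1 + p / real m)"
      using AA_pos[of p m] assms(1) by (intro mult_le_cancel_left1[THEN iffD2]) auto
    then show ?thesis using step.IH True by (simp add: AA_Suc)
  next
    case False
    then have "m = 0" by simp
    then show ?thesis using step.IH by simp
  qed
qed simp

context setting
begin

interpretation prob_space M by (rule ps)

definition Q :: "nat \<Rightarrow> real" where
  "Q n = EE p n (\<lambda>xs. real (sum_list xs) ^ 2) / AA p n ^ 2"

lemma EE_take: "n \<le> m \<Longrightarrow> EE p m (\<lambda>xs. g (take n xs)) = EE p n g"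
  using integral_V[of "\<lambda>xs. g (take n xs)" m] integral_V[of g n] V_take[of n m] by simp

lemma L2_diff:
  assumes "1 \<le> n" "n \<le> m"
  shows "integral\<^sup>L M (\<lambda>\<omega>. (HH m \<omega> / AA p m - HH n \<omega> / AA p n) ^ 2) = Q m - Q n"
proof -
  let ?S = "\<lambda>xs. real (sum_list xs)" and ?T = "\<lambda>xs. real (sum_list (take n xs))"
  have am: "AA p m > 0" and an: "AA p n > 0" using p0 by (auto intro!: AA_pos)
  define c1 where "c1 = 1 / AA p m ^ 2"
  define c2 where "c2 = 2 / (AA p m * AA p n)"
  define c3 where "c3 = 1 / AA p n ^ 2"
  have "integral\<^sup>L M (\<lambda>\<omega>. (HH m \<omega> / AA p m - HH n \<omega> / AA p n) ^ 2)
      = EE p m (\<lambda>xs. (?S xs / AA p m - ?T xs / AA p n) ^ 2)"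
    using integral_V[of "\<lambda>xs. (?S xs / AA p m - ?T xs / AA p n) ^ 2" m] assms
    by (simp add: HH_def V_take[of n m])
  also have "\<dots> = EE p m (\<lambda>xs. c1 * ?S xs ^ 2 - c2 * (?S xs * ?T xs) + c3 * ?T xs ^ 2)"
    using am an unfolding c1_def c2_def c3_def
    by (intro arg_cong[where f="EE p m"] ext) (simp add: power2_eq_square field_simps)
  also have "\<dots> = c1 * EE p m (\<lambda>xs. ?S xs ^ 2) - c2 * EE p m (\<lambda>xs. ?S xs * ?T xs)
       + c3 * EE p m (\<lambda>xs. ?T xs ^ 2)"
    by (simp add: integrable_EE)
  also have "EE p m (\<lambda>xs. ?T xs ^ 2) = EE p n (\<lambda>xs. ?S xs ^ 2)"
    using EE_take[OF assms(2), of "\<lambda>xs. real (sum_list xs) ^ 2"] by simp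
  also have "EE p m (\<lambda>xs. ?S xs * ?T xs) = AA p m / AA p n * EE p n (\<lambda>xs. ?S xs ^ 2)"
    by (rule EE_cross[OF p01 assms])
  finally show ?thesis using am an unfolding Q_def c1_def c2_def c3_def by (simp add: field_simps power2_eq_square)
qed

lemma Q_step:
  assumes "m \<ge> 1"
  shows "Q (Suc m) \<le> Q m + real m powr (- (1 + p))"
proof -
  let ?E = "EE p m (\<lambda>xs. real (sum_list xs) ^ 2)"
  have am: "AA p m > 0" using p0 by (auto intro!: AA_pos)
  have E0: "?E \<ge> 0" by (intro integral_nonneg_AE) auto
  have m0: "real m > 0" using assms by simp
  define r where "r = p / real m"
  have r0: "r \<ge> 0" using p0 m0 by (simp add: r_def)
  have "Q (Suc m) = ((1 + 2 * r) * ?E + r * AA p m) / (AA p m ^ 2 * (1 + r) ^ 2)"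
    unfolding Q_def EE_second[OF p01 assms] AA_Suc[OF assms] r_def by (simp add: power_mult_distrib)
  also have "\<dots> = (1 + 2 * r) * ?E / (AA p m ^ 2 * (1 + r) ^ 2) + r * AA p m / (AA p m ^ 2 * (1 + r) ^ 2)"
    by (simp add: add_divide_distrib)
  also have "\<dots> \<le> ?E / AA p m ^ 2 + r / AA p m"
  proof (rule add_mono)
    have "(1 + 2 * r) * ?E \<le> (1 + r) ^ 2 * ?E"
      using E0 r0 by (intro mult_right_mono) (auto simp: power2_eq_square algebra_simps)
    then have "(1 + 2 * r) * ?E / (AA p m ^ 2 * (1 + r) ^ 2) \<le> (1 + r) ^ 2 * ?E / (AA p m ^ 2 * (1 + r) ^ 2)"
      using am r0 by (intro divide_right_mono) auto
    also have "\<dots> = ?E / AA p m ^ 2" using r0 by simp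
    finally show "(1 + 2 * r) * ?E / (AA p m ^ 2 * (1 + r) ^ 2) \<le> ?E / AA p m ^ 2" .
    have "AA p m \<le> AA p m * (1 + r) ^ 2"
      using am r0 by (intro mult_le_cancel_left1[THEN iffD2]) (auto simp: power2_eq_square algebra_simps)
    then have "r / (AA p m * (1 + r) ^ 2) \<le> r / AA p m"
      using am r0 by (intro divide_left_mono) auto
    moreover have "r * AA p m / (AA p m ^ 2 * (1 + r) ^ 2) = r / (AA p m * (1 + r) ^ 2)"
      using am by (simp add: power2_eq_square)
    ultimately show "r * AA p m / (AA p m ^ 2 * (1 + r) ^ 2) \<le> r / AA p m" by simp
  qed
  also have "r / AA p m \<le> real m powr (- (1 + p))"
  proof -
    have "AA p m \<ge> real m powr p" by (rule AA_ge_powr[OF p0 p1 assms])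
    moreover have "real m powr p > 0" using m0 by simp
    ultimately have "r / AA p m \<le> r / real m powr p" using r0 am by (intro divide_left_mono) auto
    also have "\<dots> \<le> (1 / real m) / real m powr p" using p1 m0 unfolding r_def by (intro divide_right_mono) auto
    also have "\<dots> = real m powr (- (1 + p))"
    proof -
      have e: "real m powr (1 + p) = real m * real m powr p" using m0 by (simp add: powr_add)
      show ?thesis unfolding powr_minus e by (simp add: field_simps)
    qed
    finally show ?thesis .
  qed
  finally show ?thesis unfolding Q_def by simp
qed

lemma Q_diff:
  assumes "1 \<le> n" "n \<le> m"
  shows "Q m - Q n \<le> real (m - n) * real n powr (- (1 + p))"
  using assms(2)
proof (induction m rule: dec_induct)
  case (step m)
  have "Q (Suc m) - Q n \<le> (Q m - Q n) + real m powr (- (1 + p))"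
    using Q_step[of m] step.hyps assms by simp
  also have "real m powr (- (1 + p)) \<le> real n powr (- (1 + p))"
    using step.hyps assms p0 by (intro powr_mono2') auto
  finally show ?case using step.IH step.hyps by (simp add: of_nat_diff algebra_simps)
qed simp

end

context setting
begin

interpretation prob_space M by (rule ps)

definition qq :: nat where "qq = nat \<lceil>6 / p\<rceil>"

lemma qq: "real qq * p \<ge> 6" "qq \<ge> 1"
proof -
  have "real qq \<ge> 6 / p" unfolding qq_def by linarith
  then show "real qq * p \<ge> 6" using p0 by (simp add: field_simps)
  then show "qq \<ge> 1" using p0 p1 by (cases qq) auto
qed

definition NN :: "nat \<Rightarrow> nat" where "NN j = (Suc j) ^ qq"

lemma NN_mono: "strict_mono NN"
  unfolding strict_mono_def NN_def using qq(2) by (auto intro!: power_strict_mono)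

lemma NN_ge1: "NN j \<ge> 1" unfolding NN_def by simp

definition MM :: "nat \<Rightarrow> 'a \<Rightarrow> real" where "MM n \<omega> = HH n \<omega> / AA p n"
definition DD :: "nat \<Rightarrow> 'a \<Rightarrow> real" where "DD j \<omega> = MM (NN (Suc j)) \<omega> - MM (NN j) \<omega>"
definition eps :: "nat \<Rightarrow> real" where "eps j = 1 / real (Suc j) ^ 2"

lemma MM_meas[measurable]: "MM n \<in> borel_measurable M" unfolding MM_def by measurable
lemma DD_meas[measurable]: "DD j \<in> borel_measurable M" unfolding DD_def by measurable

lemma integrable_D2:
  assumes "n \<le> m"
  shows "integrable M (\<lambda>\<omega>. (HH m \<omega> / AA p m - HH n \<omega> / AA p n) ^ 2)"
  using integrable_V[of "\<lambda>xs. (real (sum_list xs) / AA p m - real (sum_list (take n xs)) / AA p n) ^ 2" m] assms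
  by (simp add: HH_def V_take[of n m])

lemma prob_bound:
  "measure M {\<omega>\<in>space M. eps j \<le> \<bar>DD j \<omega>\<bar>} \<le> 2 ^ qq * real (Suc j) powr (-2)"
proof -
  define X where "X = real (Suc j)"
  have X1: "X \<ge> 1" unfolding X_def by simp
  have le: "NN j \<le> NN (Suc j)" using NN_mono by (simp add: strict_mono_less_eq)
  have eps0: "eps j > 0" unfolding eps_def by simp
  have set_eq: "{\<omega>\<in>space M. eps j \<le> \<bar>DD j \<omega>\<bar>} = {\<omega>\<in>space M. (DD j \<omega>)^2 \<ge> (eps j)^2}"
    using eps0 by (auto simp: abs_le_square_iff[symmetric])
  have int2: "integrable M (\<lambda>\<omega>. (DD j \<omega>)^2)"
    unfolding DD_def MM_def by (rule integrable_D2[OF le])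
  have mk: "measure M {\<omega>\<in>space M. (DD j \<omega>)^2 \<ge> (eps j)^2} \<le> integral\<^sup>L M (\<lambda>\<omega>. (DD j \<omega>)^2) / (eps j)^2"
    by (rule integral_Markov_inequality_measure[OF int2, of "space M"]) (use eps0 in auto)
  have "integral\<^sup>L M (\<lambda>\<omega>. (DD j \<omega>)^2) = Q (NN (Suc j)) - Q (NN j)"
    unfolding DD_def MM_def by (rule L2_diff[OF NN_ge1 le])
  also have "\<dots> \<le> real (NN (Suc j) - NN j) * real (NN j) powr (- (1 + p))"
    by (rule Q_diff[OF NN_ge1 le])
  also have "\<dots> \<le> real (NN (Suc j)) * real (NN j) powr (- (1 + p))"
    by (intro mult_right_mono) auto
  finally have i: "integral\<^sup>L M (\<lambda>\<omega>. (DD j \<omega>)^2) \<le> real (NN (Suc j)) * real (NN j) powr (- (1 + p))" .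
  have a: "real (NN (Suc j)) \<le> 2 ^ qq * X powr real qq"
  proof -
    have "real (NN (Suc j)) = (X + 1) ^ qq" unfolding NN_def X_def by simp
    also have "\<dots> \<le> (2 * X) ^ qq" using X1 by (intro power_mono) auto
    also have "\<dots> = 2 ^ qq * X powr real qq" using X1 by (simp add: power_mult_distrib powr_realpow)
    finally show ?thesis .
  qed
  have b: "real (NN j) powr (- (1 + p)) = X powr (- (real qq * (1 + p)))"
  proof -
    have "real (NN j) = X powr real qq" unfolding NN_def X_def by (simp add: powr_realpow)
    then show ?thesis using X1 by (simp add: powr_powr algebra_simps)
  qed
  have c: "1 / (eps j)^2 = X powr 4"
  proof -
    have "X powr 4 = X powr real 4" by simp
    also have "\<dots> = X ^ 4" using X1 by (intro powr_realpow) auto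
    finally have "X powr 4 = X ^ 4" .
    moreover have "1 / (eps j)^2 = X ^ 4" unfolding eps_def X_def by (simp add: power_divide flip: power_mult)
    ultimately show ?thesis by simp
  qed
  have "integral\<^sup>L M (\<lambda>\<omega>. (DD j \<omega>)^2) / (eps j)^2 = integral\<^sup>L M (\<lambda>\<omega>. (DD j \<omega>)^2) * (1 / (eps j)^2)"
    by simp
  also have "\<dots> \<le> (2 ^ qq * X powr real qq * X powr (- (real qq * (1 + p)))) * X powr 4"
    unfolding c
  proof (intro mult_right_mono)
    show "integral\<^sup>L M (\<lambda>\<omega>. (DD j \<omega>)^2) \<le> 2 ^ qq * X powr real qq * X powr (- (real qq * (1 + p)))"
      using i a unfolding b by (meson mult_right_mono order_trans powr_ge_zero)
  qed simp
  also have "\<dots> = 2 ^ qq * (X powr real qq * X powr (- (real qq * (1 + p))) * X powr 4)"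
    by simp
  also have "X powr real qq * X powr (- (real qq * (1 + p))) * X powr 4 = X powr (real qq + (- (real qq * (1 + p))) + 4)"
    by (simp only: powr_add)
  also have "real qq + (- (real qq * (1 + p))) + 4 = 4 - real qq * p" by (simp add: algebra_simps)
  also have "2 ^ qq * X powr (4 - real qq * p) \<le> 2 ^ qq * X powr (-2)"
    using qq(1) X1 by (intro mult_left_mono powr_mono) auto
  finally have "measure M {\<omega>\<in>space M. (DD j \<omega>)^2 \<ge> (eps j)^2} \<le> 2 ^ qq * X powr (-2)"
    using mk by linarith
  then show ?thesis unfolding set_eq X_def .
qed

lemma summable_eps: "summable eps"
proof -
  have "summable (\<lambda>n. inverse (real n ^ 2))" by (rule inverse_power_summable) simp
  then have "summable (\<lambda>n. inverse (real (Suc n) ^ 2))" by (subst summable_Suc_iff)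
  then show ?thesis unfolding eps_def by (simp add: divide_inverse)
qed

lemma AE_DD_small: "AE \<omega> in M. eventually (\<lambda>j. \<bar>DD j \<omega>\<bar> < eps j) sequentially"
proof -
  define A where "A j = {\<omega>\<in>space M. eps j \<le> \<bar>DD j \<omega>\<bar>}" for j
  have Am[measurable]: "A j \<in> sets M" for j unfolding A_def by measurable
  have sp: "summable (\<lambda>j. 2 ^ qq * real (Suc j) powr (-2))"
  proof -
    have "summable (\<lambda>n. real n powr (-2))" by (subst summable_real_powr_iff) simp
    then have "summable (\<lambda>n. real (Suc n) powr (-2))" by (subst summable_Suc_iff)
    then show ?thesis by (rule summable_mult)
  qed
  have nb: "norm (measure M (A j)) \<le> 2 ^ qq * real (Suc j) powr (-2)" for j
    using prob_bound[of j] unfolding A_def by simp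
  have "summable (\<lambda>j. measure M (A j))"
    by (rule summable_comparison_test[OF _ sp]) (use nb in blast)
  then have "AE \<omega> in M. eventually (\<lambda>j. \<omega> \<in> space M - A j) sequentially"
    by (intro borel_cantelli_AE1) (auto simp: emeasure_eq_measure)
  then show ?thesis
    by eventually_elim (auto simp: A_def elim!: eventually_mono)
qed

lemma AE_MM_conv: "AE \<omega> in M. convergent (\<lambda>j. MM (NN j) \<omega>)"
  using AE_DD_small
proof eventually_elim
  case (elim \<omega>)
  have "summable (\<lambda>j. norm (DD j \<omega>))"
  proof (rule summable_comparison_test_ev[OF _ summable_eps])
    show "eventually (\<lambda>j. norm (norm (DD j \<omega>)) \<le> eps j) sequentially"
      using elim by eventually_elim simp
  qed
  then have "summable (\<lambda>j. DD j \<omega>)" by (rule summable_norm_cancel)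
  then have "(\<lambda>n. \<Sum>i<n. DD i \<omega>) \<longlonglongrightarrow> suminf (\<lambda>j. DD j \<omega>)" by (rule summable_LIMSEQ)
  then have "(\<lambda>n. MM (NN 0) \<omega> + (\<Sum>i<n. DD i \<omega>)) \<longlonglongrightarrow> MM (NN 0) \<omega> + suminf (\<lambda>j. DD j \<omega>)"
    by (intro tendsto_intros)
  moreover have "MM (NN 0) \<omega> + (\<Sum>i<n. DD i \<omega>) = MM (NN n) \<omega>" for n
    unfolding DD_def using sum_lessThan_telescope[of "\<lambda>i. MM (NN i) \<omega>" n] by simp
  ultimately show ?case by (auto simp: convergent_def)
qed

lemma ratio_lim: "(\<lambda>j. AA p (NN (Suc j)) / AA p (NN j)) \<longlonglongrightarrow> 1"
proof -
  define c where "c n = AA p n / real n powr p" for n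
  define C where "C = 1 / Gamma (1 + p)"
  have "Gamma (1 + p) > 0" using p0 by (intro Gamma_real_pos) simp
  then have C0: "C \<noteq> 0" unfolding C_def by simp
  have cl: "c \<longlonglongrightarrow> C" unfolding c_def C_def using AA_asymp[OF p0] .
  have cN: "(\<lambda>j. c (NN j)) \<longlonglongrightarrow> C"
    using filterlim_compose[OF cl filterlim_subseq[OF NN_mono]] by (simp add: o_def)
  have cNS: "(\<lambda>j. c (NN (Suc j))) \<longlonglongrightarrow> C" using LIMSEQ_Suc[OF cN] .
  have rl: "(\<lambda>j. real (Suc (Suc j)) / real (Suc j)) \<longlonglongrightarrow> 1"
    using LIMSEQ_Suc[OF LIMSEQ_Suc_n_over_n] by simp
  have rq: "(\<lambda>j. ((real (Suc (Suc j)) / real (Suc j)) ^ qq) powr p) \<longlonglongrightarrow> (1 ^ qq) powr p"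
    by (intro tendsto_powr tendsto_power rl tendsto_const) simp
  have "(\<lambda>j. c (NN (Suc j)) / c (NN j) * ((real (Suc (Suc j)) / real (Suc j)) ^ qq) powr p) \<longlonglongrightarrow> C / C * (1 ^ qq) powr p"
    by (intro tendsto_intros cNS cN rq C0)
  then have lim: "(\<lambda>j. c (NN (Suc j)) / c (NN j) * ((real (Suc (Suc j)) / real (Suc j)) ^ qq) powr p) \<longlonglongrightarrow> 1"
    using C0 by simp
  show ?thesis
  proof (rule Lim_transform_eventually[OF lim], rule always_eventually, intro allI)
    fix j
    have a: "real (NN (Suc j)) = real (Suc (Suc j)) ^ qq" "real (NN j) = real (Suc j) ^ qq"
      unfolding NN_def by simp_all
    have pos: "real (NN (Suc j)) > 0" "real (NN j) > 0" "AA p (NN j) > 0" "AA p (NN (Suc j)) > 0"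
      using NN_ge1[of j] NN_ge1[of "Suc j"] p0 by (auto intro!: AA_pos)
    have "((real (Suc (Suc j)) / real (Suc j)) ^ qq) powr p = real (NN (Suc j)) powr p / real (NN j) powr p"
      unfolding a power_divide by (rule powr_divide)
    then show "c (NN (Suc j)) / c (NN j) * ((real (Suc (Suc j)) / real (Suc j)) ^ qq) powr p
        = AA p (NN (Suc j)) / AA p (NN j)"
      unfolding c_def using pos by (simp add: field_simps)
  qed
qed

lemma AE_H_conv: "AE \<omega> in M. (\<lambda>n. HH n \<omega> / AA p n) \<longlonglongrightarrow> lim (\<lambda>n. HH n \<omega> / AA p n)"
  using AE_MM_conv
proof eventually_elim
  case (elim \<omega>)
  then obtain L where L: "(\<lambda>j. MM (NN j) \<omega>) \<longlonglongrightarrow> L" by (auto simp: convergent_def)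
  have "(\<lambda>n. HH n \<omega> / AA p n) \<longlonglongrightarrow> L"
  proof (rule sandwich_subseq[OF _ _ _ _ NN_mono _ ratio_lim])
    show "(\<lambda>j. HH (NN j) \<omega> / AA p (NN j)) \<longlonglongrightarrow> L" using L unfolding MM_def .
  qed (use HH_mono HH_nonneg AA_mono[of p] AA_pos[of p] p0 in auto)
  then show ?case by (simp add: limI)
qed

end

context setting
begin

interpretation prob_space M by (rule ps)

definition hatW :: "'a \<Rightarrow> real" where
  "hatW \<omega> = max 0 (lim (\<lambda>n. HH n \<omega> / AA p n))"

definition W :: "'a \<Rightarrow> real" where
  "W \<omega> = hatW \<omega> / Gamma (1 + p)"

lemma Gp: "Gamma (1 + p) > 0" using p0 by (intro Gamma_real_pos) simp

lemma hatW_meas[measurable]: "hatW \<in> borel_measurable M"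
  unfolding hatW_def by measurable

lemma W_meas[measurable]: "W \<in> borel_measurable M"
  unfolding W_def by measurable

lemma W_nonneg: "W \<omega> \<ge> 0"
  unfolding W_def hatW_def using Gp by simp

lemma AE_hatW: "AE \<omega> in M. (\<lambda>n. HH n \<omega> / AA p n) \<longlonglongrightarrow> hatW \<omega>"
  using AE_H_conv
proof eventually_elim
  case (elim \<omega>)
  have "lim (\<lambda>n. HH n \<omega> / AA p n) \<ge> 0"
    by (rule LIMSEQ_le_const[OF elim]) (use HH_nonneg AA_pos[of p] p0 in \<open>auto intro!: divide_nonneg_pos\<close>)
  then show ?case using elim unfolding hatW_def by simp
qed

lemma AE_W: "AE \<omega> in M. (\<lambda>n. HH n \<omega> / real n powr p) \<longlonglongrightarrow> W \<omega>"
  using AE_hatW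
proof eventually_elim
  case (elim \<omega>)
  have "(\<lambda>n. HH n \<omega> / AA p n * (AA p n / real n powr p)) \<longlonglongrightarrow> hatW \<omega> * (1 / Gamma (1 + p))"
    by (intro tendsto_mult elim AA_asymp p0)
  then have lim: "(\<lambda>n. HH n \<omega> / AA p n * (AA p n / real n powr p)) \<longlonglongrightarrow> W \<omega>"
    unfolding W_def by simp
  show ?case
  proof (rule Lim_transform_eventually[OF lim])
    show "eventually (\<lambda>n. HH n \<omega> / AA p n * (AA p n / real n powr p) = HH n \<omega> / real n powr p) sequentially"
      using eventually_gt_at_top[of 0]
    proof eventually_elim
      case (elim n)
      have "AA p n > 0" using p0 by (intro AA_pos) simp
      then show ?case by simp
    qed
  qed
qed

lemma W_moment:
  "integrable M (\<lambda>\<omega>. W \<omega> ^ k) \<and> integral\<^sup>L M (\<lambda>\<omega>. W \<omega> ^ k) = fact k / Gamma (1 + real k * p)"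
proof (cases "k = 0")
  case True
  then show ?thesis by (simp add: prob_space)
next
  case False
  then have k1: "k \<ge> 1" by simp
  have conv2: "convergent (\<lambda>n. integral\<^sup>L M (\<lambda>\<omega>. (HH n \<omega> / real n powr p) ^ (2 * k)))"
    using mom_limit[of "2 * k"] k1 by (auto simp: convergent_def)
  obtain B where B: "\<And>n. norm (integral\<^sup>L M (\<lambda>\<omega>. (HH n \<omega> / real n powr p) ^ (2 * k))) \<le> B"
    using convergent_imp_Bseq[OF conv2] by (auto simp: Bseq_def)
  have ui: "integrable M (\<lambda>\<omega>. W \<omega> ^ k) \<and>
      (\<lambda>n. integral\<^sup>L M (\<lambda>\<omega>. (HH n \<omega> / real n powr p) ^ k)) \<longlonglongrightarrow> integral\<^sup>L M (\<lambda>\<omega>. W \<omega> ^ k)"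
  proof (rule ui_limit[OF ps])
    show "AE \<omega> in M. (\<lambda>n. (HH n \<omega> / real n powr p) ^ k) \<longlonglongrightarrow> W \<omega> ^ k"
      using AE_W by eventually_elim (rule tendsto_power)
    show "0 \<le> (HH n \<omega> / real n powr p) ^ k" for n \<omega> using HH_nonneg by simp
    show "integrable M (\<lambda>\<omega>. (HH n \<omega> / real n powr p) ^ k)" for n by (rule integrable_HH)
    show "integrable M (\<lambda>\<omega>. ((HH n \<omega> / real n powr p) ^ k) ^ 2)" for n by (rule integrable_HH)
    show "integral\<^sup>L M (\<lambda>\<omega>. ((HH n \<omega> / real n powr p) ^ k) ^ 2) \<le> B" for n
      using B[of n] by (simp add: power_mult[symmetric] mult.commute)
  qed measurable
  then have "integral\<^sup>L M (\<lambda>\<omega>. W \<omega> ^ k) = fact k / Gamma (1 + real k * p)"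
    using LIMSEQ_unique mom_limit[OF k1] by blast
  then show ?thesis using ui by simp
qed

lemma W_mgf:
  "integrable M (\<lambda>\<omega>. exp (l * W \<omega>)) \<and>
   (\<lambda>k. l ^ k / Gamma (1 + real k * p)) sums (integral\<^sup>L M (\<lambda>\<omega>. exp (l * W \<omega>)))"
proof -
  define f where "f k \<omega> = (l * W \<omega>) ^ k / fact k" for k \<omega>
  have intf: "integrable M (f k)" for k
    unfolding f_def power_mult_distrib using W_moment[of k] by simp
  have sumf: "AE \<omega> in M. summable (\<lambda>k. norm (f k \<omega>))"
  proof (rule AE_I2)
    fix \<omega>
    have "summable (\<lambda>k. inverse (fact k) * \<bar>l * W \<omega>\<bar> ^ k)" by (rule summable_exp)
    moreover have "(\<lambda>k. norm (f k \<omega>)) = (\<lambda>k. inverse (fact k) * \<bar>l * W \<omega>\<bar> ^ k)"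
      unfolding f_def by (intro ext) (simp add: abs_mult power_abs divide_inverse mult.commute)
    ultimately show "summable (\<lambda>k. norm (f k \<omega>))" by simp
  qed
  have intnorm: "integral\<^sup>L M (\<lambda>\<omega>. norm (f k \<omega>)) = \<bar>l\<bar> ^ k / Gamma (1 + real k * p)" for k
  proof -
    have "(\<lambda>\<omega>. norm (f k \<omega>)) = (\<lambda>\<omega>. \<bar>l\<bar> ^ k / fact k * W \<omega> ^ k)"
      unfolding f_def using W_nonneg by (auto simp: power_abs abs_mult power_mult_distrib)
    then show ?thesis using W_moment[of k] by simp
  qed
  have sumint: "summable (\<lambda>k. integral\<^sup>L M (\<lambda>\<omega>. norm (f k \<omega>)))"
    unfolding intnorm using summable_ML[OF p0, of "\<bar>l\<bar>"] by simp
  have fsum: "(\<Sum>k. f k \<omega>) = exp (l * W \<omega>)" for \<omega>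
    using exp_converges[of "l * W \<omega>"] unfolding f_def by (simp add: sums_iff scaleR_conv_of_real divide_inverse mult.commute)
  have intk: "integral\<^sup>L M (f k) = l ^ k / Gamma (1 + real k * p)" for k
    unfolding f_def power_mult_distrib using W_moment[of k] by simp
  show ?thesis
    using integrable_suminf[OF intf sumf sumint] sums_integral[OF intf sumf sumint]
    unfolding fsum intk by simp
qed

end

context setting
begin

interpretation prob_space M by (rule ps)

definition ZZ :: "nat \<Rightarrow> 'a \<Rightarrow> real" where
  "ZZ n \<omega> = real n powr (p / 2) * GG (1/2) (sum_list (V n \<omega>))"

lemma ZZ_meas[measurable]: "ZZ n \<in> borel_measurable M"
proof -
  have "(\<lambda>\<omega>. GG (1/2) (sum_list (V n \<omega>))) \<in> borel_measurable M"
    by (rule measurable_compose[OF meas_V]) simp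
  then show ?thesis unfolding ZZ_def by measurable
qed

lemma GG_nonneg: "GG (1/2) S \<ge> 0"
  unfolding GG_def by (intro prod_nonneg) (auto simp: field_simps)

lemma ZZ_nonneg: "ZZ n \<omega> \<ge> 0"
  unfolding ZZ_def using GG_nonneg by simp

lemma ZZ_int: "integrable M (ZZ n)"
  unfolding ZZ_def using integrable_V[of "\<lambda>xs. GG (1/2) (sum_list xs)" n] by simp

lemma ZZ_exp: assumes "n \<ge> 1" shows "integral\<^sup>L M (ZZ n) \<le> 1"
proof -
  have "integral\<^sup>L M (ZZ n) = real n powr (p / 2) * EE p n (\<lambda>xs. GG (1/2) (sum_list xs))"
    unfolding ZZ_def using integral_V[of "\<lambda>xs. GG (1/2) (sum_list xs)" n] by simp
  also have "\<dots> = real n powr (p / 2) * AA (- (p / 2)) n"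
    using EE_GG[OF p01 assms, of "1/2"] by simp
  also have "\<dots> \<le> real n powr (p / 2) * real n powr (- (p / 2))"
    using AA_neg_le[of "p/2" n] p0 p1 assms by (intro mult_left_mono) auto
  also have "\<dots> = 1" using assms by (simp add: powr_add[symmetric])
  finally show ?thesis .
qed

lemma ZZ_markov:
  assumes "n \<ge> 1" "K > 0"
  shows "measure M {\<omega>\<in>space M. ZZ n \<omega> \<ge> K} \<le> 1 / K"
proof -
  have "measure M {\<omega>\<in>space M. ZZ n \<omega> \<ge> K} \<le> integral\<^sup>L M (ZZ n) / K"
    by (rule integral_Markov_inequality_measure[OF ZZ_int, of "space M"]) (use assms ZZ_nonneg in auto)
  also have "\<dots> \<le> 1 / K" using ZZ_exp[OF assms(1)] assms(2) by (intro divide_right_mono) auto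
  finally show ?thesis .
qed

lemma ZZ_lower: "ZZ n \<omega> \<ge> exp (- 3/2) * (real n powr (p / 2) * (HH n \<omega> + 1) powr (- 1/2))"
proof -
  have "GG (1/2) (sum_list (V n \<omega>)) \<ge> exp (- (1/2) - 4 * (1/2) ^ 2) * (real (sum_list (V n \<omega>)) + 1) powr (- (1/2))"
    by (rule GG_lower) auto
  then have "GG (1/2) (sum_list (V n \<omega>)) \<ge> exp (- 3/2) * (HH n \<omega> + 1) powr (- 1/2)"
    by (simp add: HH_def power2_eq_square)
  then have "real n powr (p / 2) * GG (1/2) (sum_list (V n \<omega>)) \<ge> real n powr (p / 2) * (exp (- 3/2) * (HH n \<omega> + 1) powr (- 1/2))"
    by (intro mult_left_mono) auto
  then show ?thesis unfolding ZZ_def by (simp add: algebra_simps)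
qed

lemma ZZ_large:
  assumes conv: "(\<lambda>n. HH n \<omega> / real n powr p) \<longlonglongrightarrow> 0" and K: "K > 0"
  shows "eventually (\<lambda>n. K \<le> ZZ n \<omega>) sequentially"
proof -
  define e where "e = exp (- 3/2 :: real)"
  have e0: "e > 0" unfolding e_def by simp
  have l2: "(\<lambda>n. real n powr (- p)) \<longlonglongrightarrow> 0"
    using p0 by (intro tendsto_neg_powr filterlim_real_sequentially) auto
  have lim0: "(\<lambda>n. HH n \<omega> / real n powr p + real n powr (- p)) \<longlonglongrightarrow> 0"
    using tendsto_add[OF conv l2] by simp
  have ev: "eventually (\<lambda>n. HH n \<omega> / real n powr p + real n powr (- p) = (HH n \<omega> + 1) / real n powr p) sequentially"
    using eventually_gt_at_top[of 0] by eventually_elim (simp add: powr_minus add_divide_distrib divide_inverse distrib_right)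
  have lim: "(\<lambda>n. (HH n \<omega> + 1) / real n powr p) \<longlonglongrightarrow> 0"
    by (rule Lim_transform_eventually[OF lim0 ev])
  define \<delta> where "\<delta> = (e / K) ^ 2"
  have d0: "\<delta> > 0" unfolding \<delta>_def using e0 K by simp
  have "eventually (\<lambda>n. dist ((HH n \<omega> + 1) / real n powr p) 0 < \<delta>) sequentially"
    using lim d0 by (rule tendstoD)
  then show ?thesis
    using eventually_gt_at_top[of 0]
  proof eventually_elim
    case (elim n)
    define u where "u = (HH n \<omega> + 1) / real n powr p"
    have u0: "u > 0" unfolding u_def using elim HH_nonneg[of n \<omega>] by (intro divide_pos_pos) auto
    have "\<bar>HH n \<omega> + 1\<bar> = HH n \<omega> + 1" using HH_nonneg[of n \<omega>] by simp
    then have ud: "u < \<delta>" using elim u0 unfolding u_def by simp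
    have "sqrt u < e / K" using ud u0 e0 K unfolding \<delta>_def by (simp add: real_sqrt_less_iff real_less_lsqrt)
    then have "K < e / sqrt u" using u0 K e0 by (simp add: field_simps)
    also have "e / sqrt u = e * (real n powr (p / 2) * (HH n \<omega> + 1) powr (- 1/2))"
    proof -
      have h0: "HH n \<omega> + 1 > 0" using HH_nonneg[of n \<omega>] by simp
      have a0: "real n powr (p / 2) > 0" using elim by simp
      have sq0: "sqrt (HH n \<omega> + 1) > 0" using h0 by simp
      have su: "sqrt u = sqrt (HH n \<omega> + 1) / real n powr (p / 2)"
        unfolding u_def using elim by (simp add: real_sqrt_divide powr_half_sqrt[symmetric] powr_powr)
      have hp: "(HH n \<omega> + 1) powr (- 1/2) = 1 / sqrt (HH n \<omega> + 1)"
        using h0 by (simp add: powr_minus_divide powr_half_sqrt)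
      show ?thesis unfolding su hp using a0 sq0 by (simp add: field_simps)
    qed
    also have "\<dots> \<le> ZZ n \<omega>" using ZZ_lower unfolding e_def .
    finally show ?case by simp
  qed
qed

lemma W_pos: "measure M {\<omega>\<in>space M. W \<omega> > 0} = 1"
proof -
  define Bad where "Bad = {\<omega>\<in>space M. W \<omega> = 0}"
  have Bad_m[measurable]: "Bad \<in> sets M" unfolding Bad_def by measurable
  obtain N0 where N0: "{\<omega>\<in>space M. \<not> (\<lambda>n. HH n \<omega> / real n powr p) \<longlonglongrightarrow> W \<omega>} \<subseteq> N0"
    "emeasure M N0 = 0" "N0 \<in> sets M"
    using AE_W by (rule AE_E)
  have N0null: "N0 \<in> null_sets M" using N0 by auto
  have bnd: "measure M Bad \<le> 1 / K" if K: "K > 0" for K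
  proof -
    define F where "F m = {\<omega>\<in>space M. \<forall>n\<ge>m. K \<le> ZZ (Suc n) \<omega>}" for m
    have Fm[measurable]: "F m \<in> sets M" for m unfolding F_def by measurable
    have sub: "Bad - N0 \<subseteq> (\<Union>m. F m)"
    proof
      fix \<omega> assume w: "\<omega> \<in> Bad - N0"
      then have conv: "(\<lambda>n. HH n \<omega> / real n powr p) \<longlonglongrightarrow> 0"
        using N0(1) unfolding Bad_def by auto
      obtain m where "\<forall>n\<ge>m. K \<le> ZZ n \<omega>"
        using ZZ_large[OF conv K] by (auto simp: eventually_at_top_linorder)
      then have "\<omega> \<in> F m" using w unfolding F_def Bad_def by auto
      then show "\<omega> \<in> (\<Union>m. F m)" by blast
    qed
    have Fb: "measure M (F m) \<le> 1 / K" for m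
    proof -
      have "F m \<subseteq> {\<omega>\<in>space M. ZZ (Suc m) \<omega> \<ge> K}" unfolding F_def by auto
      then have "measure M (F m) \<le> measure M {\<omega>\<in>space M. ZZ (Suc m) \<omega> \<ge> K}"
        by (intro finite_measure_mono) measurable
      also have "\<dots> \<le> 1 / K" using ZZ_markov[of "Suc m" K] K by simp
      finally show ?thesis .
    qed
    have "(\<lambda>m. measure M (F m)) \<longlonglongrightarrow> measure M (\<Union>m. F m)"
      by (rule finite_Lim_measure_incseq) (auto simp: incseq_def F_def)
    then have U: "measure M (\<Union>m. F m) \<le> 1 / K"
      using Fb by (intro LIMSEQ_le_const2) auto
    have "measure M Bad = measure M (Bad - N0)" using measure_Diff_null_set[OF Bad_m N0null] by simp
    also have "\<dots> \<le> measure M (\<Union>m. F m)" using sub by (intro finite_measure_mono) measurable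
    finally show ?thesis using U by simp
  qed
  have B0: "measure M Bad = 0"
  proof (rule ccontr)
    assume "measure M Bad \<noteq> 0"
    moreover have "0 \<le> measure M Bad" by (rule measure_nonneg)
    ultimately have pos: "measure M Bad > 0" by linarith
    have "measure M Bad \<le> 1 / (2 / measure M Bad)" using bnd[of "2 / measure M Bad"] pos by simp
    then show False using pos by simp
  qed
  have "{\<omega>\<in>space M. W \<omega> > 0} = space M - Bad" unfolding Bad_def using W_nonneg by (auto simp: less_le)
  then show ?thesis using prob_compl[OF Bad_m] B0 by simp
qed

end

theorem corollary2p2:
  fixes M :: "'a measure" and X :: "nat \<Rightarrow> 'a \<Rightarrow> nat" and p :: real
  assumes "prob_space M"
    and "0 < p" and "p < 1"
    and meas: "\<And>i. X i \<in> M \<rightarrow>\<^sub>M count_space UNIV"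
    and law: "\<And>n xs. length xs = n \<Longrightarrow>
               measure M {\<omega>\<in>space M. \<forall>i<n. X (Suc i) \<omega> = xs ! i} = pmf (proc_pmf p n) xs"
  defines "H \<equiv> (\<lambda>n \<omega>. \<Sum>i=1..n. real (X i \<omega>))"
  shows "(\<forall>k::nat. k \<ge> 1 \<longrightarrow>
           (\<lambda>n. integral\<^sup>L M (\<lambda>\<omega>. (H n \<omega> / real n powr p) ^ k))
             \<longlonglongrightarrow> fact k / Gamma (1 + real k * p))
       \<and> (\<forall>k::nat. k \<ge> 1 \<longrightarrow>
           (\<exists>C. \<forall>n. integral\<^sup>L M (\<lambda>\<omega>. \<bar>H n \<omega> / a_seq p n\<bar> ^ k) \<le> C))
       \<and> (\<exists>W hatW. W \<in> borel_measurable M \<and> hatW \<in> borel_measurable M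
           \<and> (AE \<omega> in M. (\<lambda>n. H n \<omega> / a_seq p n) \<longlonglongrightarrow> hatW \<omega>)
           \<and> (AE \<omega> in M. (\<lambda>n. H n \<omega> / real n powr p) \<longlonglongrightarrow> W \<omega>)
           \<and> (AE \<omega> in M. W \<omega> = hatW \<omega> / Gamma (1 + p))
           \<and> mittag_leffler_distributed M p W
           \<and> measure M {\<omega>\<in>space M. W \<omega> > 0} = 1)"
proof -
  interpret S: setting M X p
    by (rule setting.intro) (use assms in auto)
  have Heq: "H = S.HH"
    unfolding H_def by (intro ext) (rule S.HH_eq)
  have aeq: "a_seq p = AA p" by (intro ext) (rule a_seq_AA)
  have c1: "\<forall>k::nat. k \<ge> 1 \<longrightarrow>
           (\<lambda>n. integral\<^sup>L M (\<lambda>\<omega>. (H n \<omega> / real n powr p) ^ k))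
             \<longlonglongrightarrow> fact k / Gamma (1 + real k * p)"
    unfolding Heq using S.mom_limit by blast
  have c2: "\<forall>k::nat. k \<ge> 1 \<longrightarrow>
           (\<exists>C. \<forall>n. integral\<^sup>L M (\<lambda>\<omega>. \<bar>H n \<omega> / a_seq p n\<bar> ^ k) \<le> C)"
    unfolding Heq aeq using S.Lk_bound by blast
  have ml: "mittag_leffler_distributed M p S.W"
    unfolding mittag_leffler_distributed_def using S.W_mgf by simp
  have c3: "\<exists>W hatW. W \<in> borel_measurable M \<and> hatW \<in> borel_measurable M
           \<and> (AE \<omega> in M. (\<lambda>n. H n \<omega> / a_seq p n) \<longlonglongrightarrow> hatW \<omega>)
           \<and> (AE \<omega> in M. (\<lambda>n. H n \<omega> / real n powr p) \<longlonglongrightarrow> W \<omega>)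
           \<and> (AE \<omega> in M. W \<omega> = hatW \<omega> / Gamma (1 + p))
           \<and> mittag_leffler_distributed M p W
           \<and> measure M {\<omega>\<in>space M. W \<omega> > 0} = 1"
    unfolding Heq aeq
    by (intro exI[of _ S.W] exI[of _ S.hatW] conjI S.W_meas S.hatW_meas S.AE_hatW S.AE_W ml S.W_pos AE_I2)
       (simp add: S.W_def)
  show ?thesis using c1 c2 c3 by blast
qed

end
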